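(* Fix $\lambda>0$. For a suitable constant $C$, the algorithm Approx-Partition-Function$(\lambda,\epsilon)$ is an $\epsilon n$-approximation algorithm for $\log Z(G,\lambda)$ on graphs $G$ with $n$ vertices and maximum degree at most $\Delta$, and its query complexity is $\tilde{O}\left((1/\epsilon)^{\tilde{O}(\sqrt{\Delta})}\right)$.
   Context: Let $G=(V,E)$ be a finite undirected graph with $n$ vertices and maximum degree at most $\Delta$ (parallel edges and self-loops allowed); $Z(G,\lambda)=\sum_{M}\lambda^{|M|}$ over matchings $M$ of $G$, $\pi_{G,\lambda}(M)=\lambda^{|M|}/Z(G,\lambda)$, and $p_{H,\lambda}(v)$ is the Gibbs probability that $v$ is uncovered in graph $H$. Access is via oracles $\mathcal{D}(u)$ (degree) and $\mathcal{N}(u,i)$ ($i$-th neighbor); query complexity counts oracle calls. An $\epsilon n$-approximation algorithm for a graph quantity $X$ outputs, for every input graph, a value $\widehat X$ with $|\widehat X-X|\le\epsilon n$ with probability at least $2/3$. The algorithm: fix a uniformly random total order $\succ$ on $V$ (by assigning i.i.d. uniform $[0,1]$ labels lazily to visited vertices), and let $G_v$ be the subgraph induced by $\{u:u\succeq v\}$. Let $s=\lceil C/\epsilon^2\rceil$ and sample a multiset $U$ of $s$ vertices uniformly and independently. For each $u\in U$ compute an estimate $\widehat p_u$ of $p_{G_u,\lambda}(u)$ by the following procedure on $G_u$: for $h=1,2,\dots$ compute $x^h_u(u)$, the root value of the solution of $x_w=(1+\lambda\sum_{w'\text{ child of }w}x_{w'})^{-1}$ on the depth-$h$ truncation of the tree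 of simple paths in $G_u$ starting at $u$ (explored by depth-first search with the oracles), stopping at the first $h\ge2$ with $|\log x^h_u(u)-\log x^{h-1}_u(u)|\le\epsilon/(2e)$, and set $\widehat p_u=x^h_u(u)$. Output $(n/s)\sum_{u\in U}-\log\widehat p_u$. $\tilde{O}$ hides polylogarithmic factors, with $\Delta$ treated as a constant. *)

theory Defs
  imports "HOL-Probability.Probability" "HOL-Combinatorics.Permutations"
begin

text \<open>The degree oracle is D(u) = length (adj u), the neighbour oracle is
  N(u,i) = adj u ! i.  Parallel edges are repeated entries; a self-loop at u
  is an occurrence of u in adj u.\<close>

definition mult :: "(nat \<Rightarrow> nat list) \<Rightarrow> nat \<Rightarrow> nat \<Rightarrow> nat" where
  "mult adj u v = count (mset (adj u)) v"

definition multigraph :: "nat \<Rightarrow> (nat \<Rightarrow> nat list) \<Rightarrow> bool" where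
  "multigraph n adj \<longleftrightarrow>
     (\<forall>u<n. set (adj u) \<subseteq> {..<n}) \<and>
     (\<forall>u<n. \<forall>v<n. u \<noteq> v \<longrightarrow> mult adj u v = mult adj v u)"

definition max_degree_le :: "nat \<Rightarrow> (nat \<Rightarrow> nat list) \<Rightarrow> nat \<Rightarrow> bool" where
  "max_degree_le n adj \<Delta> \<longleftrightarrow> (\<forall>u<n. length (adj u) \<le> \<Delta>)"

text \<open>Non-loop edges: the j-th parallel copy of the edge {u,v}, u < v.\<close>
definition edges :: "nat \<Rightarrow> (nat \<Rightarrow> nat list) \<Rightarrow> (nat \<times> nat \<times> nat) set" where
  "edges n adj = {(u, v, j). u < v \<and> v < n \<and> j < mult adj u v}"

definition ends :: "nat \<times> nat \<times> nat \<Rightarrow> nat set" where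
  "ends e = {fst e, fst (snd e)}"

definition is_matching :: "nat \<Rightarrow> (nat \<Rightarrow> nat list) \<Rightarrow> (nat \<times> nat \<times> nat) set \<Rightarrow> bool" where
  "is_matching n adj M \<longleftrightarrow> M \<subseteq> edges n adj \<and>
     (\<forall>e\<in>M. \<forall>e'\<in>M. e \<noteq> e' \<longrightarrow> ends e \<inter> ends e' = {})"

definition Z :: "nat \<Rightarrow> (nat \<Rightarrow> nat list) \<Rightarrow> real \<Rightarrow> real" where
  "Z n adj lam = (\<Sum>M\<in>{M. is_matching n adj M}. lam ^ card M)"

text \<open>tree_val lam adj inG h pth w: value at the node w (end of the simple pth
  pth, which contains w) of the depth-h truncation of the tree of simple paths
  in the subgraph induced by {v. inG v}, together with the number of oracle
  queries made by the depth-first exploration: D(w) and N(w,i) for all i at each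
  non-leaf node; leaves (remaining depth 0) have value 1 and cost no query.\<close>

fun tree_val :: "real \<Rightarrow> (nat \<Rightarrow> nat list) \<Rightarrow> (nat \<Rightarrow> bool) \<Rightarrow> nat \<Rightarrow> nat list \<Rightarrow> nat \<Rightarrow> real \<times> nat" where
  "tree_val lam adj inG 0 pth w = (1, 0)"
| "tree_val lam adj inG (Suc h) pth w =
     (let rs = map (\<lambda>w'. tree_val lam adj inG h (w' # pth) w')
                 (filter (\<lambda>w'. inG w' \<and> w' \<notin> set pth) (adj w))
      in (1 / (1 + lam * sum_list (map fst rs)),
          1 + length (adj w) + sum_list (map snd rs)))"

text \<open>sigma is the random total order, given as a rank permutation of {..<n}:
  v \<succeq> u iff sigma v \<ge> sigma u.  G_u is induced by {v. sigma v \<ge> sigma u}.\<close>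

definition xval :: "real \<Rightarrow> (nat \<Rightarrow> nat list) \<Rightarrow> (nat \<Rightarrow> nat) \<Rightarrow> nat \<Rightarrow> nat \<Rightarrow> real \<times> nat" where
  "xval lam adj \<sigma> u h = tree_val lam adj (\<lambda>v. \<sigma> v \<ge> \<sigma> u) h [u] u"

definition stop_cond :: "real \<Rightarrow> real \<Rightarrow> (nat \<Rightarrow> nat list) \<Rightarrow> (nat \<Rightarrow> nat) \<Rightarrow> nat \<Rightarrow> nat \<Rightarrow> bool" where
  "stop_cond lam \<epsilon> adj \<sigma> u h \<longleftrightarrow> h \<ge> 2 \<and>
     \<bar>ln (fst (xval lam adj \<sigma> u h)) - ln (fst (xval lam adj \<sigma> u (h - 1)))\<bar> \<le> \<epsilon> / (2 * exp 1)"

text \<open>Estimate of p for vertex u (arbitrary value 1 if the loop never stops).\<close>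
definition p_est :: "real \<Rightarrow> real \<Rightarrow> (nat \<Rightarrow> nat list) \<Rightarrow> (nat \<Rightarrow> nat) \<Rightarrow> nat \<Rightarrow> real" where
  "p_est lam \<epsilon> adj \<sigma> u =
     (if \<exists>h. stop_cond lam \<epsilon> adj \<sigma> u h
      then fst (xval lam adj \<sigma> u (LEAST h. stop_cond lam \<epsilon> adj \<sigma> u h)) else 1)"

definition queries_u :: "real \<Rightarrow> real \<Rightarrow> (nat \<Rightarrow> nat list) \<Rightarrow> (nat \<Rightarrow> nat) \<Rightarrow> nat \<Rightarrow> enat" where
  "queries_u lam \<epsilon> adj \<sigma> u =
     (if \<exists>h. stop_cond lam \<epsilon> adj \<sigma> u h
      then enat (\<Sum>h\<in>{1..(LEAST h. stop_cond lam \<epsilon> adj \<sigma> u h)}. snd (xval lam adj \<sigma> u h))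
      else \<infinity>)"

definition num_samples :: "real \<Rightarrow> real \<Rightarrow> nat" where
  "num_samples C \<epsilon> = nat \<lceil>C / \<epsilon>\<^sup>2\<rceil>"

definition apf_output :: "real \<Rightarrow> real \<Rightarrow> real \<Rightarrow> nat \<Rightarrow> (nat \<Rightarrow> nat list) \<Rightarrow> (nat \<Rightarrow> nat) \<Rightarrow> nat list \<Rightarrow> real" where
  "apf_output lam \<epsilon> C n adj \<sigma> U =
     real n / real (num_samples C \<epsilon>) * sum_list (map (\<lambda>u. - ln (p_est lam \<epsilon> adj \<sigma> u)) U)"

definition apf_queries :: "real \<Rightarrow> real \<Rightarrow> (nat \<Rightarrow> nat list) \<Rightarrow> (nat \<Rightarrow> nat) \<Rightarrow> nat list \<Rightarrow> enat" where
  "apf_queries lam \<epsilon> adj \<sigma> U = sum_list (map (queries_u lam \<epsilon> adj \<sigma>) U)"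

text \<open>Randomness: a uniformly random rank permutation (same law as the order
  induced by i.i.d. uniform labels) and an independent uniform list of s vertices
  (= s i.i.d. uniform vertices).\<close>
definition order_pmf :: "nat \<Rightarrow> (nat \<Rightarrow> nat) pmf" where
  "order_pmf n = pmf_of_set {\<sigma>. \<sigma> permutes {..<n}}"

definition sample_pmf :: "nat \<Rightarrow> nat \<Rightarrow> nat list pmf" where
  "sample_pmf n s = pmf_of_set {U. length U = s \<and> set U \<subseteq> {..<n}}"

definition apf_run :: "real \<Rightarrow> real \<Rightarrow> real \<Rightarrow> nat \<Rightarrow> ((nat \<Rightarrow> nat) \<times> nat list) pmf" where
  "apf_run lam \<epsilon> C n = pair_pmf (order_pmf n) (sample_pmf n (num_samples C \<epsilon>))"

end

theory Submission
  imports Defs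
begin


lemma key_alg:
  fixes lam S T :: real and \<Delta> :: nat
  assumes lam: "lam > 0" and S: "S \<ge> 0" and T: "T \<ge> 0" and CS: "S\<^sup>2 \<le> real \<Delta> * T"
  shows "lam * (S - T) \<le> (1 - 1 / (1 + sqrt (lam * \<Delta>))) * (1 + lam * S)"
proof (cases "\<Delta> = 0")
  case True
  have "S\<^sup>2 \<le> 0" using CS True by simp
  then have "S\<^sup>2 = 0" by (meson antisym zero_le_power2)
  then have "S = 0" by simp
  then show ?thesis using True lam T by simp
next
  case False
  define t where "t = sqrt (lam * \<Delta>)"
  have t: "t > 0" using False lam by (simp add: t_def)
  have tt: "t\<^sup>2 = lam * \<Delta>" using lam by (simp add: t_def)
  define u where "u = lam * S"
  have u: "u \<ge> 0" using lam S by (simp add: u_def)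
  have TS: "T \<ge> S\<^sup>2 / \<Delta>" using CS False by (simp add: field_simps)
  have "u\<^sup>2 / t\<^sup>2 = u\<^sup>2 / (lam * \<Delta>)" by (simp add: tt)
  also have "\<dots> = lam * S\<^sup>2 / \<Delta>" using lam False by (simp add: u_def power2_eq_square field_simps)
  also have "\<dots> \<le> lam * T" using TS lam by (simp add: mult_left_mono divide_le_eq mult.assoc)
  finally have A: "u\<^sup>2 / t\<^sup>2 \<le> lam * T" .
  have B: "t + u\<^sup>2 / t \<ge> u"
  proof -
    have "0 \<le> (t - u)\<^sup>2" by simp
    then have "t * t + u\<^sup>2 \<ge> 2 * u * t" by (simp add: power2_diff power2_eq_square algebra_simps)
    moreover have "u * t \<ge> 0" using u t by simp
    ultimately have "t * t + u\<^sup>2 \<ge> u * t" by linarith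
    then show ?thesis using t by (simp add: field_simps power2_eq_square)
  qed
  have "1 + u \<le> (1 + t) * (1 + u\<^sup>2 / t\<^sup>2)"
  proof -
    have e: "(1 + t) * (1 + u\<^sup>2 / t\<^sup>2) = 1 + t + u\<^sup>2/t\<^sup>2 + u\<^sup>2 / t" using t by (simp add: field_simps power2_eq_square)
    have "u\<^sup>2/t\<^sup>2 \<ge> 0" by simp
    then show ?thesis unfolding e using B by linarith
  qed
  also have "\<dots> \<le> (1 + t) * (1 + lam * T)" using A t by (intro mult_left_mono) auto
  finally have C: "1 + u \<le> (1 + t) * (1 + lam * T)" .
  have "lam * (S - T) = (1 + u) - (1 + lam*T)" by (simp add: u_def algebra_simps)
  also have "\<dots> \<le> (1 + u) - (1 + u) / (1 + t)" using C t by (simp add: field_simps)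
  also have "\<dots> = (1 - 1 / (1 + t)) * (1 + lam * S)" using t by (simp add: field_simps u_def)
  finally show ?thesis by (simp add: t_def)
qed



lemma Q_deriv:
  fixes s :: real
  assumes "s \<ge> 0"
  shows "((\<lambda>\<tau>. 1 / (1 + exp \<tau> * s)) has_real_derivative
          - ((1 / (1 + exp t * s)) * (1 - 1 / (1 + exp t * s)))) (at t)"
proof -
  have pos: "1 + exp t * s > 0" using assms by (simp add: add_pos_nonneg)
  have e: "1 - 1 / (1 + exp t * s) = exp t * s / (1 + exp t * s)"
    using pos by (simp add: field_simps)
  show ?thesis
    apply (rule derivative_eq_intros refl | simp)+
    using pos unfolding e by (auto simp: field_simps)
qed

definition Hf :: "real \<Rightarrow> 'a set \<Rightarrow> ('a \<Rightarrow> real) \<Rightarrow> real \<Rightarrow> real" where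
  "Hf lam I s \<tau> = ln (1 + lam * (\<Sum>i\<in>I. 1 / (1 + exp \<tau> * s i)))"

lemma Hf_deriv:
  assumes lam: "lam > 0" and s: "\<And>i. i \<in> I \<Longrightarrow> s i \<ge> 0"
  shows "(Hf lam I s has_real_derivative
     - (lam * (\<Sum>i\<in>I. (1 / (1 + exp t * s i)) * (1 - 1 / (1 + exp t * s i))))
        / (1 + lam * (\<Sum>i\<in>I. 1 / (1 + exp t * s i)))) (at t)"
proof -
  have pos: "1 + lam * (\<Sum>i\<in>I. 1 / (1 + exp t * s i)) > 0"
    using lam s by (intro add_pos_nonneg) (auto intro!: sum_nonneg mult_nonneg_nonneg add_pos_nonneg)
  have D: "((\<lambda>\<tau>. \<Sum>i\<in>I. 1 / (1 + exp \<tau> * s i)) has_real_derivative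
            (\<Sum>i\<in>I. - ((1 / (1 + exp t * s i)) * (1 - 1 / (1 + exp t * s i))))) (at t)"
    by (rule DERIV_sum) (rule Q_deriv[OF s])
  have D2: "((\<lambda>\<tau>. 1 + lam * (\<Sum>i\<in>I. 1 / (1 + exp \<tau> * s i))) has_real_derivative
            lam * (\<Sum>i\<in>I. - ((1 / (1 + exp t * s i)) * (1 - 1 / (1 + exp t * s i))))) (at t)"
    using DERIV_add[OF DERIV_const DERIV_cmult[OF D, of lam], of 1] by simp
  show ?thesis unfolding Hf_def
    using DERIV_chain2[OF DERIV_ln_divide[OF pos] D2] by (simp add: sum_negf)
qed

lemma Hf_deriv_bound:
  fixes lam :: real and \<Delta> :: nat
  assumes lam: "lam > 0" and s: "\<And>i. i \<in> I \<Longrightarrow> s i \<ge> 0" and fin: "finite I" and card: "card I \<le> \<Delta>"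
  shows "lam * (\<Sum>i\<in>I. (1 / (1 + exp t * s i)) * (1 - 1 / (1 + exp t * s i)))
        / (1 + lam * (\<Sum>i\<in>I. 1 / (1 + exp t * s i))) \<le> 1 - 1 / (1 + sqrt (lam * \<Delta>))"
proof -
  define Q where "Q i = 1 / (1 + exp t * s i)" for i
  have Q0: "Q i \<ge> 0" if "i \<in> I" for i using s[OF that] by (simp add: Q_def add_pos_nonneg)
  define S where "S = (\<Sum>i\<in>I. Q i)"
  define T where "T = (\<Sum>i\<in>I. (Q i)\<^sup>2)"
  have S0: "S \<ge> 0" unfolding S_def using Q0 by (simp add: sum_nonneg)
  have T0: "T \<ge> 0" unfolding T_def by (simp add: sum_nonneg)
  have "S\<^sup>2 \<le> T * card I" unfolding S_def T_def by (rule sum_squared_le_sum_of_squares)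
  also have "\<dots> \<le> T * \<Delta>" using T0 card by (intro mult_left_mono) auto
  finally have CS: "S\<^sup>2 \<le> real \<Delta> * T" by (simp add: mult.commute)
  have eq: "(\<Sum>i\<in>I. Q i * (1 - Q i)) = S - T"
    unfolding S_def T_def by (simp add: algebra_simps power2_eq_square sum_subtractf)
  have pos: "1 + lam * S > 0" using lam S0 by (simp add: add_pos_nonneg)
  have "lam * (S - T) \<le> (1 - 1 / (1 + sqrt (lam * \<Delta>))) * (1 + lam * S)"
    by (rule key_alg[OF lam S0 T0 CS])
  then have "lam * (S - T) / (1 + lam * S) \<le> 1 - 1 / (1 + sqrt (lam * \<Delta>))"
    using pos by (simp add: divide_le_eq)
  then show ?thesis using eq by (simp add: Q_def[symmetric] S_def)
qed

lemma Hf_lip: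
  fixes lam :: real and \<Delta> :: nat
  assumes lam: "lam > 0" and s: "\<And>i. i \<in> I \<Longrightarrow> s i \<ge> 0" and fin: "finite I" and card: "card I \<le> \<Delta>"
  shows "\<bar>Hf lam I s a - Hf lam I s b\<bar> \<le> (1 - 1 / (1 + sqrt (lam * \<Delta>))) * \<bar>a - b\<bar>"
proof -
  define \<kappa> where "\<kappa> = 1 - 1 / (1 + sqrt (lam * \<Delta>))"
  have gen: "\<bar>Hf lam I s y - Hf lam I s x\<bar> \<le> \<kappa> * (y - x)" if xy: "x < y" for x y
  proof -
    have der: "\<And>t. (Hf lam I s has_real_derivative
       - (lam * (\<Sum>i\<in>I. (1 / (1 + exp t * s i)) * (1 - 1 / (1 + exp t * s i))))
        / (1 + lam * (\<Sum>i\<in>I. 1 / (1 + exp t * s i)))) (at t)"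
      by (rule Hf_deriv[OF lam s])
    have "continuous_on {x..y} (Hf lam I s)"
      using der by (meson DERIV_continuous continuous_at_imp_continuous_on)
    moreover have "\<And>t. Hf lam I s differentiable (at t)" using der real_differentiable_def by blast
    ultimately obtain l z where z: "x < z" "z < y" "DERIV (Hf lam I s) z :> l"
       and eq: "Hf lam I s y - Hf lam I s x = (y - x) * l"
      using MVT[OF xy] by blast
    have l: "l = - (lam * (\<Sum>i\<in>I. (1 / (1 + exp z * s i)) * (1 - 1 / (1 + exp z * s i))))
        / (1 + lam * (\<Sum>i\<in>I. 1 / (1 + exp z * s i)))"
      using DERIV_unique[OF z(3) der] .
    have nn: "lam * (\<Sum>i\<in>I. (1 / (1 + exp z * s i)) * (1 - 1 / (1 + exp z * s i)))
        / (1 + lam * (\<Sum>i\<in>I. 1 / (1 + exp z * s i))) \<ge> 0"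
    proof -
      have a: "0 \<le> (1 / (1 + exp z * s i)) * (1 - 1 / (1 + exp z * s i))" if "i \<in> I" for i
      proof -
        have "1 + exp z * s i \<ge> 1" using s[OF that] by simp
        then show ?thesis by (simp add: divide_le_eq)
      qed
      have "0 \<le> (\<Sum>i\<in>I. 1 / (1 + exp z * s i))"
        using s by (intro sum_nonneg) (simp add: add_pos_nonneg)
      moreover have "0 \<le> 1 + lam * (\<Sum>i\<in>I. 1 / (1 + exp z * s i))"
        using calculation lam by simp
      moreover have "0 \<le> (\<Sum>i\<in>I. (1 / (1 + exp z * s i)) * (1 - 1 / (1 + exp z * s i)))"
        using a by (rule sum_nonneg)
      ultimately show ?thesis using lam by (intro divide_nonneg_nonneg mult_nonneg_nonneg) auto
    qed
    have "\<bar>l\<bar> = lam * (\<Sum>i\<in>I. (1 / (1 + exp z * s i)) * (1 - 1 / (1 + exp z * s i)))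
        / (1 + lam * (\<Sum>i\<in>I. 1 / (1 + exp z * s i)))"
      unfolding l minus_divide_left[symmetric] abs_minus_cancel using nn by (rule abs_of_nonneg)
    also have "\<dots> \<le> \<kappa>" unfolding \<kappa>_def
      by (rule Hf_deriv_bound[where lam=lam and I=I and s=s and \<Delta>=\<Delta> and t=z, OF lam s fin card])
    finally have "\<bar>l\<bar> \<le> \<kappa>" .
    then show ?thesis using eq xy by (simp add: abs_mult mult.commute mult_left_mono)
  qed
  show ?thesis
  proof (cases a b rule: linorder_cases)
    case less then show ?thesis using gen[OF less] by (simp add: \<kappa>_def abs_minus_commute)
  next
    case greater then show ?thesis using gen[OF greater] by (simp add: \<kappa>_def)
  qed simp
qed



lemma sl_idx: "sum_list (map f cs) = (\<Sum>i<length cs. f (cs ! i))"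
  by (simp add: sum_list_sum_nth atLeast0LessThan)

lemma two_step:
  fixes lam D :: real and \<Delta> :: nat and a s :: "'a \<Rightarrow> real"
  assumes lam: "lam > 0" and D: "D \<ge> 0" and len: "length cs \<le> \<Delta>"
    and s: "\<And>c. c \<in> set cs \<Longrightarrow> s c \<ge> 0"
    and lo: "\<And>c. c \<in> set cs \<Longrightarrow> exp (-D) * s c \<le> a c"
    and hi: "\<And>c. c \<in> set cs \<Longrightarrow> a c \<le> exp D * s c"
  shows "\<bar>ln (1 / (1 + lam * sum_list (map (\<lambda>c. 1 / (1 + a c)) cs)))
          - ln (1 / (1 + lam * sum_list (map (\<lambda>c. 1 / (1 + s c)) cs)))\<bar>
         \<le> (1 - 1 / (1 + sqrt (lam * \<Delta>))) * D"
proof -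
  define I where "I = {..<length cs}"
  define s' where "s' i = s (cs ! i)" for i
  have s': "\<And>i. i \<in> I \<Longrightarrow> s' i \<ge> 0" unfolding s'_def I_def using s by auto
  have fin: "finite I" and card: "card I \<le> \<Delta>" using len by (auto simp: I_def)
  define H where "H = Hf lam I s'"
  define Fa where "Fa = ln (1 + lam * sum_list (map (\<lambda>c. 1 / (1 + a c)) cs))"
  have a0: "a c \<ge> 0" if "c \<in> set cs" for c using lo[OF that] s[OF that]
    by (meson exp_ge_zero mult_nonneg_nonneg order_trans)
  have sumpos: "0 \<le> sum_list (map (\<lambda>c. 1 / (1 + f c)) cs)" if "\<And>c. c \<in> set cs \<Longrightarrow> f c \<ge> 0" for f :: "'a \<Rightarrow> real"
    using that by (intro sum_list_nonneg) (auto simp: add_pos_nonneg)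
  have H_eq: "H \<tau> = ln (1 + lam * sum_list (map (\<lambda>c. 1 / (1 + exp \<tau> * s c)) cs))" for \<tau>
    unfolding H_def Hf_def sl_idx I_def s'_def by simp
  have lnpos: "ln (1 / (1 + x)) = - ln (1 + x)" if "x \<ge> 0" for x :: real
    using that by (simp add: ln_div)
  have L: "ln (1 / (1 + lam * sum_list (map (\<lambda>c. 1 / (1 + a c)) cs))) = - Fa"
    unfolding Fa_def using lam sumpos[of a] a0 by (intro lnpos) auto
  have R: "ln (1 / (1 + lam * sum_list (map (\<lambda>c. 1 / (1 + s c)) cs))) = - H 0"
    unfolding H_eq using lam sumpos[of s] s by (subst lnpos) auto
  have mono: "ln (1 + lam * sum_list (map (\<lambda>c. 1 / (1 + f c)) cs))
      \<le> ln (1 + lam * sum_list (map (\<lambda>c. 1 / (1 + g c)) cs))"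
    if "\<And>c. c \<in> set cs \<Longrightarrow> g c \<le> f c" "\<And>c. c \<in> set cs \<Longrightarrow> g c \<ge> 0" for f g :: "'a \<Rightarrow> real"
  proof -
    have f0: "\<And>c. c \<in> set cs \<Longrightarrow> f c \<ge> 0" using that by (meson order_trans)
    have "sum_list (map (\<lambda>c. 1 / (1 + f c)) cs) \<le> sum_list (map (\<lambda>c. 1 / (1 + g c)) cs)"
      using that by (intro sum_list_mono) (simp add: add_pos_nonneg frac_le)
    then show ?thesis using sumpos[of f] f0 lam
      by (subst ln_le_cancel_iff) (auto simp: add_pos_nonneg mult_left_mono)
  qed
  have up: "Fa \<le> H (-D)" unfolding Fa_def H_eq
    using lo s by (intro mono) auto
  have dn: "H D \<le> Fa" unfolding Fa_def H_eq
    using hi s a0 by (intro mono) auto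
  have l1: "\<bar>H (-D) - H 0\<bar> \<le> (1 - 1 / (1 + sqrt (lam * \<Delta>))) * D"
    using Hf_lip[where lam=lam and I=I and s=s' and \<Delta>=\<Delta> and a="-D" and b=0, OF lam s' fin card] D unfolding H_def by simp
  have l2: "\<bar>H D - H 0\<bar> \<le> (1 - 1 / (1 + sqrt (lam * \<Delta>))) * D"
    using Hf_lip[where lam=lam and I=I and s=s' and \<Delta>=\<Delta> and a="D" and b=0, OF lam s' fin card] D unfolding H_def by simp
  show ?thesis unfolding L R using up dn l1 l2 by (simp add: abs_le_iff)
qed



definition edgesIn :: "nat \<Rightarrow> (nat \<Rightarrow> nat list) \<Rightarrow> nat set \<Rightarrow> (nat \<times> nat \<times> nat) set" where
  "edgesIn n adj S = {e \<in> edges n adj. ends e \<subseteq> S}"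

definition mats :: "nat \<Rightarrow> (nat \<Rightarrow> nat list) \<Rightarrow> nat set \<Rightarrow> (nat \<times> nat \<times> nat) set set" where
  "mats n adj S = {M. M \<subseteq> edgesIn n adj S \<and> (\<forall>e\<in>M. \<forall>e'\<in>M. e \<noteq> e' \<longrightarrow> ends e \<inter> ends e' = {})}"

definition Zs :: "real \<Rightarrow> nat \<Rightarrow> (nat \<Rightarrow> nat list) \<Rightarrow> nat set \<Rightarrow> real" where
  "Zs lam n adj S = (\<Sum>M\<in>mats n adj S. lam ^ card M)"

lemma mult_le: "mult adj u v \<le> length (adj u)"
  unfolding mult_def count_mset by (rule count_le_length)

lemma finite_edges:
  assumes "max_degree_le n adj \<Delta>"
  shows "finite (edges n adj)"
proof -
  have "edges n adj \<subseteq> {..<n} \<times> {..<n} \<times> {..<\<Delta>}"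
  proof
    fix e assume "e \<in> edges n adj"
    then obtain u v j where e: "e = (u, v, j)" "u < v" "v < n" "j < mult adj u v"
      unfolding edges_def by auto
    have "mult adj u v \<le> \<Delta>" using mult_le[of adj u v] assms e unfolding max_degree_le_def
      by (meson dual_order.strict_trans order_trans)
    then show "e \<in> {..<n} \<times> {..<n} \<times> {..<\<Delta>}" using e by auto
  qed
  then show ?thesis by (rule finite_subset) auto
qed

lemma finite_mats:
  assumes "max_degree_le n adj \<Delta>"
  shows "finite (mats n adj S)"
proof -
  have "mats n adj S \<subseteq> Pow (edges n adj)" unfolding mats_def edgesIn_def by auto
  then show ?thesis using finite_edges[OF assms] by (meson finite_Pow_iff finite_subset)
qed

lemma mats_finite_elem:
  assumes "max_degree_le n adj \<Delta>" "M \<in> mats n adj S"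
  shows "finite M"
proof -
  have "M \<subseteq> edges n adj" using assms(2) unfolding mats_def edgesIn_def by auto
  then show ?thesis using finite_edges[OF assms(1)] by (rule finite_subset)
qed

lemma empty_in_mats: "{} \<in> mats n adj S" unfolding mats_def by auto

lemma Zs_ge1:
  assumes "max_degree_le n adj \<Delta>" "lam > 0"
  shows "Zs lam n adj S \<ge> 1"
proof -
  have "(\<Sum>M\<in>mats n adj S. lam ^ card M) = lam ^ card ({}::(nat\<times>nat\<times>nat) set) + (\<Sum>M\<in>mats n adj S - {{}}. lam ^ card M)"
    by (rule sum.remove[OF finite_mats[OF assms(1)] empty_in_mats])
  moreover have "(\<Sum>M\<in>mats n adj S - {{}}. lam ^ card M) \<ge> 0"
    using assms(2) by (intro sum_nonneg) auto
  ultimately show ?thesis unfolding Zs_def by simp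
qed

lemma Zs_empty: "Zs lam n adj {} = 1"
proof -
  have "edgesIn n adj {} = {}" unfolding edgesIn_def ends_def by auto
  then have "mats n adj {} = {{}}" unfolding mats_def by auto
  then show ?thesis unfolding Zs_def by simp
qed

lemma Z_Zs: "Z n adj lam = Zs lam n adj {..<n}"
proof -
  have "edgesIn n adj {..<n} = edges n adj" unfolding edgesIn_def edges_def ends_def by auto
  then have "mats n adj {..<n} = {M. is_matching n adj M}"
    unfolding mats_def is_matching_def by auto
  then show ?thesis unfolding Z_def Zs_def by simp
qed

lemma count_list_filter: "count_list (filter P xs) x = (if P x then count_list xs x else 0)"
  by (induct xs) auto

lemma ends_nonempty: "ends e \<noteq> {}" unfolding ends_def by auto

lemma Ae_sum:
  assumes md: "max_degree_le n adj \<Delta>" and eS: "e \<in> edgesIn n adj S"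
  shows "(\<Sum>M\<in>{M \<in> mats n adj S. e \<in> M}. lam ^ card M) = lam * Zs lam n adj (S - ends e)"
proof -
  have bij: "bij_betw (insert e) (mats n adj (S - ends e)) {M \<in> mats n adj S. e \<in> M}"
  proof (rule bij_betw_imageI)
    have nin: "e \<notin> M'" if "M' \<in> mats n adj (S - ends e)" for M'
      using that ends_nonempty[of e] unfolding mats_def edgesIn_def by auto
    show "inj_on (insert e) (mats n adj (S - ends e))"
      by (rule inj_onI) (metis nin insert_ident)
    show "insert e ` mats n adj (S - ends e) = {M \<in> mats n adj S. e \<in> M}"
    proof (intro equalityI subsetI)
      fix M assume "M \<in> insert e ` mats n adj (S - ends e)"
      then obtain M' where M': "M = insert e M'" "M' \<in> mats n adj (S - ends e)" by auto
      have sub: "M' \<subseteq> edgesIn n adj S" using M'(2) unfolding mats_def edgesIn_def by auto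
      have disj: "ends e \<inter> ends e' = {}" if "e' \<in> M'" for e'
        using M'(2) that unfolding mats_def edgesIn_def by auto
      show "M \<in> {M \<in> mats n adj S. e \<in> M}"
        using M' sub eS disj unfolding mats_def by auto (blast+)
    next
      fix M assume M: "M \<in> {M \<in> mats n adj S. e \<in> M}"
      have "M - {e} \<in> mats n adj (S - ends e)"
        using M unfolding mats_def edgesIn_def by auto blast
      moreover have "M = insert e (M - {e})" using M by auto
      ultimately show "M \<in> insert e ` mats n adj (S - ends e)" by blast
    qed
  qed
  have "(\<Sum>M\<in>{M \<in> mats n adj S. e \<in> M}. lam ^ card M)
      = (\<Sum>M'\<in>mats n adj (S - ends e). lam ^ card (insert e M'))"
    using sum.reindex_bij_betw[OF bij, of "\<lambda>M. lam ^ card M"] by simp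
  also have "\<dots> = (\<Sum>M'\<in>mats n adj (S - ends e). lam * lam ^ card M')"
  proof (rule sum.cong[OF refl])
    fix M' assume M': "M' \<in> mats n adj (S - ends e)"
    have "e \<notin> M'" using M' ends_nonempty[of e] unfolding mats_def edgesIn_def by auto
    then show "lam ^ card (insert e M') = lam * lam ^ card M'"
      using mats_finite_elem[OF md M'] by simp
  qed
  finally show ?thesis unfolding Zs_def by (simp add: sum_distrib_left)
qed


lemma sl_count:
  fixes f :: "'a \<Rightarrow> real"
  assumes "set xs \<subseteq> X" "finite X"
  shows "sum_list (map f xs) = (\<Sum>x\<in>X. real (count_list xs x) * f x)"
  using assms(1)
proof (induct xs)
  case Nil then show ?case by simp
next
  case (Cons a xs)
  have aX: "a \<in> X" using Cons.prems by auto
  have "sum_list (map f (a # xs)) = f a + (\<Sum>x\<in>X. real (count_list xs x) * f x)"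
    using Cons by simp
  also have "f a = (\<Sum>x\<in>X. (if x = a then f x else 0))"
    using aX assms(2) by (simp add: sum.delta')
  also have "\<dots> = (\<Sum>x\<in>X. (if x = a then 1 else 0) * f x)"
    by (rule sum.cong) auto
  finally have "sum_list (map f (a # xs)) = (\<Sum>x\<in>X. real (count_list xs x) * f x + (if x = a then 1 else 0) * f x)"
    by (simp add: sum.distrib)
  also have "\<dots> = (\<Sum>x\<in>X. real (count_list (a # xs) x) * f x)"
    by (rule sum.cong) (auto simp: algebra_simps)
  finally show ?case .
qed

lemma edge_sym:
  assumes mg: "multigraph n adj" "u < n" "v < n" "u \<noteq> v"
  shows "mult adj u v = mult adj v u"
  using assms unfolding multigraph_def by auto

lemma MR:
  assumes mg: "multigraph n adj" and md: "max_degree_le n adj \<Delta>" and w: "w \<in> S" and Sn: "S \<subseteq> {..<n}"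
  shows "Zs lam n adj S = Zs lam n adj (S - {w}) +
     lam * sum_list (map (\<lambda>w'. Zs lam n adj (S - {w} - {w'})) (filter (\<lambda>w'. w' \<in> S \<and> w' \<noteq> w) (adj w)))"
proof -
  define I where "I = {e \<in> edgesIn n adj S. w \<in> ends e}"
  define A0 where "A0 = {M \<in> mats n adj S. M \<inter> I = {}}"
  define Ae where "Ae e = {M \<in> mats n adj S. e \<in> M}" for e
  have finI: "finite I" unfolding I_def edgesIn_def using finite_edges[OF md] by auto
  have A0eq: "A0 = mats n adj (S - {w})"
    unfolding A0_def I_def mats_def edgesIn_def by auto
  have cover: "mats n adj S = A0 \<union> (\<Union>e\<in>I. Ae e)"
    unfolding A0_def Ae_def by auto
  have disj1: "A0 \<inter> (\<Union>e\<in>I. Ae e) = {}" unfolding A0_def Ae_def by auto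
  have disj2: "\<forall>e\<in>I. \<forall>e'\<in>I. e \<noteq> e' \<longrightarrow> Ae e \<inter> Ae e' = {}"
  proof (intro ballI impI)
    fix e e' assume ee: "e \<in> I" "e' \<in> I" "e \<noteq> e'"
    then have we: "w \<in> ends e" "w \<in> ends e'" unfolding I_def by auto
    show "Ae e \<inter> Ae e' = {}"
    proof (rule ccontr)
      assume "Ae e \<inter> Ae e' \<noteq> {}"
      then obtain M where M: "M \<in> mats n adj S" "e \<in> M" "e' \<in> M" unfolding Ae_def by auto
      then have "ends e \<inter> ends e' = {}" using ee(3) unfolding mats_def by auto
      with we show False by auto
    qed
  qed
  have finA: "\<forall>e\<in>I. finite (Ae e)" unfolding Ae_def using finite_mats[OF md] by auto
  have finA0: "finite A0" unfolding A0_def using finite_mats[OF md] by auto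
  have "Zs lam n adj S = (\<Sum>M\<in>A0. lam ^ card M) + (\<Sum>M\<in>(\<Union>e\<in>I. Ae e). lam ^ card M)"
    unfolding Zs_def cover using finA0 finI finA disj1 by (intro sum.union_disjoint) auto
  also have "(\<Sum>M\<in>(\<Union>e\<in>I. Ae e). lam ^ card M) = (\<Sum>e\<in>I. (\<Sum>M\<in>Ae e. lam ^ card M))"
    using finI finA disj2 by (rule sum.UNION_disjoint)
  also have "\<dots> = (\<Sum>e\<in>I. lam * Zs lam n adj (S - ends e))"
    by (rule sum.cong[OF refl]) (unfold Ae_def, rule Ae_sum[OF md], simp add: I_def)
  finally have step1: "Zs lam n adj S = Zs lam n adj (S - {w}) + lam * (\<Sum>e\<in>I. Zs lam n adj (S - ends e))"
    unfolding A0eq Zs_def[symmetric] by (simp add: sum_distrib_left)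
  define \<phi> where "\<phi> p = (min w (fst p), max w (fst p), snd p)" for p :: "nat \<times> nat"
  define J where "J = Sigma (S - {w}) (\<lambda>w'. {..<mult adj w w'})"
  have wn: "w < n" using w Sn by auto
  have IJ: "I = \<phi> ` J"
  proof (intro equalityI subsetI)
    fix e assume e: "e \<in> I"
    then obtain u v j where uvj: "e = (u, v, j)" "u < v" "v < n" "j < mult adj u v" "u \<in> S" "v \<in> S"
      "w = u \<or> w = v"
      unfolding I_def edgesIn_def edges_def ends_def by auto
    show "e \<in> \<phi> ` J"
    proof (cases "w = u")
      case True
      then have "(v, j) \<in> J" "e = \<phi> (v, j)" using uvj unfolding J_def \<phi>_def by auto
      then show ?thesis by blast
    next
      case False
      then have wv: "w = v" using uvj by auto
      have "mult adj u v = mult adj v u" using edge_sym[OF mg, of u v] uvj by auto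
      then have "(u, j) \<in> J" "e = \<phi> (u, j)" using uvj wv False unfolding J_def \<phi>_def by auto
      then show ?thesis by blast
    qed
  next
    fix e assume "e \<in> \<phi> ` J"
    then obtain w' j where wj: "w' \<in> S" "w' \<noteq> w" "j < mult adj w w'" "e = \<phi> (w', j)"
      unfolding J_def by auto
    have w'n: "w' < n" using wj Sn by auto
    have m: "mult adj (min w w') (max w w') = mult adj w w'"
      using edge_sym[OF mg wn w'n] wj by (cases "w < w'") (auto simp: min_def max_def)
    show "e \<in> I" using wj w m wn w'n unfolding I_def edgesIn_def edges_def ends_def \<phi>_def
      by (auto simp: min_def max_def)
  qed
  have injphi: "inj_on \<phi> J"
  proof (rule inj_onI)
    fix p q assume "p \<in> J" "q \<in> J" "\<phi> p = \<phi> q"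
    then show "p = q" unfolding J_def \<phi>_def
      by (cases p, cases q) (auto simp: min_def max_def split: if_splits)
  qed
  have endsphi: "ends (\<phi> p) = {w, fst p}" for p unfolding ends_def \<phi>_def
    by (auto simp: min_def max_def)
  have "(\<Sum>e\<in>I. Zs lam n adj (S - ends e)) = (\<Sum>p\<in>J. Zs lam n adj (S - ends (\<phi> p)))"
    unfolding IJ by (rule sum.reindex[OF injphi, unfolded comp_def])
  also have "\<dots> = (\<Sum>p\<in>J. Zs lam n adj (S - {w} - {fst p}))"
    by (rule sum.cong[OF refl]) (simp add: endsphi Diff_insert2[symmetric] insert_commute)
  also have "\<dots> = (\<Sum>w'\<in>S - {w}. (\<Sum>j<mult adj w w'. Zs lam n adj (S - {w} - {w'})))"
  proof -
    have fin: "finite (S - {w})" using Sn by (meson finite_Diff finite_lessThan finite_subset)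
    have "(\<Sum>p\<in>J. Zs lam n adj (S - {w} - {fst p})) = (\<Sum>(w', j)\<in>J. Zs lam n adj (S - {w} - {w'}))"
      by (rule sum.cong) auto
    also have "\<dots> = (\<Sum>w'\<in>S - {w}. (\<Sum>j<mult adj w w'. Zs lam n adj (S - {w} - {w'})))"
      unfolding J_def by (rule sum.Sigma[symmetric]) (use fin in auto)
    finally show ?thesis .
  qed
  also have "\<dots> = (\<Sum>w'\<in>S - {w}. real (mult adj w w') * Zs lam n adj (S - {w} - {w'}))"
    by simp
  also have "\<dots> = sum_list (map (\<lambda>w'. Zs lam n adj (S - {w} - {w'})) (filter (\<lambda>w'. w' \<in> S \<and> w' \<noteq> w) (adj w)))"
  proof -
    have fin: "finite (S - {w})" using Sn by (meson finite_Diff finite_lessThan finite_subset)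
    have "sum_list (map (\<lambda>w'. Zs lam n adj (S - {w} - {w'})) (filter (\<lambda>w'. w' \<in> S \<and> w' \<noteq> w) (adj w)))
      = (\<Sum>w'\<in>S - {w}. count_list (filter (\<lambda>w'. w' \<in> S \<and> w' \<noteq> w) (adj w)) w' * Zs lam n adj (S - {w} - {w'}))"
      by (rule sl_count[OF _ fin]) auto
    also have "\<dots> = (\<Sum>w'\<in>S - {w}. real (mult adj w w') * Zs lam n adj (S - {w} - {w'}))"
      by (rule sum.cong[OF refl]) (simp add: count_list_filter mult_def count_mset)
    finally show ?thesis by simp
  qed
  finally show ?thesis using step1 by simp
qed



lemma sum_list_div: "sum_list (map (\<lambda>x. f x / (c::real)) xs) = sum_list (map f xs) / c"
  by (induct xs) (simp_all add: add_divide_distrib)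

lemma sum_list_cmult: "sum_list (map (\<lambda>x. (c::real) * f x) xs) = c * sum_list (map f xs)"
  by (induct xs) (simp_all add: algebra_simps)

lemma sum_list_01:
  fixes f :: "'a \<Rightarrow> real"
  assumes "\<And>x. x \<in> set xs \<Longrightarrow> 0 \<le> f x \<and> f x \<le> 1"
  shows "0 \<le> sum_list (map f xs) \<and> sum_list (map f xs) \<le> length xs"
proof
  show "0 \<le> sum_list (map f xs)" using assms by (intro sum_list_nonneg) auto
  have "sum_list (map f xs) \<le> sum_list (map (\<lambda>x. 1) xs)" using assms by (intro sum_list_mono) auto
  also have "\<dots> = length xs" by (induct xs) auto
  finally show "sum_list (map f xs) \<le> length xs" .
qed

lemma f_range:
  fixes lam x :: real and \<Delta> :: nat
  assumes "lam > 0" "0 \<le> x" "x \<le> \<Delta>"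
  shows "1 / (1 + lam * \<Delta>) \<le> 1 / (1 + lam * x) \<and> 1 / (1 + lam * x) \<le> 1"
proof
  have "1 + lam * x \<le> 1 + lam * \<Delta>" using assms by (simp add: mult_left_mono)
  moreover have "0 < 1 + lam * x" using assms by (simp add: add_pos_nonneg)
  ultimately show "1 / (1 + lam * \<Delta>) \<le> 1 / (1 + lam * x)" by (simp add: frac_le)
  have "1 \<le> 1 + lam * x" using assms by simp
  then show "1 / (1 + lam * x) \<le> 1" by simp
qed

lemma f_anti:
  fixes lam a b :: real
  assumes "lam > 0" "0 \<le> a" "a \<le> b"
  shows "1 / (1 + lam * b) \<le> 1 / (1 + lam * a)"
  using assms by (intro divide_left_mono) (auto simp: mult_left_mono add_pos_nonneg)

lemma ln_range:
  fixes q x y :: real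
  assumes "0 < q" "q \<le> x" "x \<le> 1" "q \<le> y" "y \<le> 1"
  shows "\<bar>ln x - ln y\<bar> \<le> - ln q"
proof -
  have "ln q \<le> ln x" "ln x \<le> 0" "ln q \<le> ln y" "ln y \<le> 0" using assms by auto
  then show ?thesis by linarith
qed

lemma ln_ratio:
  fixes x p D :: real
  assumes "0 < x" "0 < p" "\<bar>ln x - ln p\<bar> \<le> D"
  shows "exp (-D) * p \<le> x \<and> x \<le> exp D * p"
proof
  have "exp (-D) * p = exp (ln p - D)" using assms by (simp add: exp_diff exp_minus field_simps)
  also have "\<dots> \<le> exp (ln x)" using assms(3) by (simp add: abs_le_iff)
  finally show "exp (-D) * p \<le> x" using assms by simp
  have "x = exp (ln x)" using assms by simp
  also have "\<dots> \<le> exp (ln p + D)" using assms(3) by (simp add: abs_le_iff)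
  also have "\<dots> = exp D * p" using assms by (simp add: exp_add)
  finally show "x \<le> exp D * p" .
qed

locale tree =
  fixes lam :: real and n :: nat and adj :: "nat \<Rightarrow> nat list" and \<Delta> :: nat and inG :: "nat \<Rightarrow> bool"
  assumes lam: "lam > 0" and mg: "multigraph n adj" and md: "max_degree_le n adj \<Delta>"
begin

definition Vg where "Vg = {v. v < n \<and> inG v}"
definition valid where "valid pth \<longleftrightarrow> pth \<noteq> [] \<and> distinct pth \<and> set pth \<subseteq> Vg"
definition ch where "ch pth = filter (\<lambda>w'. inG w' \<and> w' \<notin> set pth) (adj (hd pth))"
definition Sp where "Sp pth = Vg - set (tl pth)"
definition P where "P pth = Zs lam n adj (Sp pth - {hd pth}) / Zs lam n adj (Sp pth)"
definition TV where "TV h pth = fst (tree_val lam adj inG h pth (hd pth))"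

definition q where "q = 1 / (1 + lam * \<Delta>)"
definition B where "B = ln (1 + lam * \<Delta>)"
definition \<rho> where "\<rho> = 1 - 1 / (1 + sqrt (lam * \<Delta>))"

lemma q_pos: "q > 0" unfolding q_def using lam by (simp add: add_pos_nonneg)
lemma B_q: "B = - ln q" unfolding B_def q_def using lam by (simp add: ln_div add_pos_nonneg)
lemma B_nonneg: "B \<ge> 0" unfolding B_def using lam by simp
lemma rho_range: "0 \<le> \<rho> \<and> \<rho> < 1"
proof -
  have "0 \<le> sqrt (lam * \<Delta>)" using lam by simp
  then show ?thesis unfolding \<rho>_def by (simp add: divide_le_eq add_pos_nonneg)
qed

lemma TV_0: "TV 0 pth = 1" unfolding TV_def by simp

lemma TV_Suc: "TV (Suc h) pth = 1 / (1 + lam * sum_list (map (\<lambda>w'. TV h (w' # pth)) (ch pth)))"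
  unfolding TV_def ch_def by (simp add: Let_def comp_def)

lemma valid_hd: "valid pth \<Longrightarrow> hd pth < n"
  unfolding valid_def Vg_def by (cases pth) auto

lemma len_ch: "valid pth \<Longrightarrow> length (ch pth) \<le> \<Delta>"
proof -
  assume v: "valid pth"
  have "length (ch pth) \<le> length (adj (hd pth))" unfolding ch_def by simp
  also have "\<dots> \<le> \<Delta>" using md valid_hd[OF v] unfolding max_degree_le_def by auto
  finally show ?thesis .
qed

lemma ch_lt: "valid pth \<Longrightarrow> w' \<in> set (adj (hd pth)) \<Longrightarrow> w' < n"
  using mg valid_hd unfolding multigraph_def by auto

lemma child_valid: "valid pth \<Longrightarrow> w' \<in> set (ch pth) \<Longrightarrow> valid (w' # pth)"
  using ch_lt[of pth w'] unfolding valid_def ch_def Vg_def by auto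

lemma Sp_sub: "Sp pth \<subseteq> {..<n}" unfolding Sp_def Vg_def by auto

lemma hd_in_Sp: "valid pth \<Longrightarrow> hd pth \<in> Sp pth"
  unfolding valid_def Sp_def by (cases pth) auto

lemma Zs_pos: "Zs lam n adj S > 0" using Zs_ge1[OF md lam] by (meson less_le_trans zero_less_one)

lemma P_rec:
  assumes v: "valid pth"
  shows "P pth = 1 / (1 + lam * sum_list (map (\<lambda>w'. P (w' # pth)) (ch pth)))"
proof -
  define S where "S = Sp pth"
  define w where "w = hd pth"
  have wS: "w \<in> S" using hd_in_Sp[OF v] by (simp add: S_def w_def)
  have filt: "filter (\<lambda>w'. w' \<in> S \<and> w' \<noteq> w) (adj w) = ch pth"
    unfolding ch_def w_def[symmetric]
  proof (rule filter_cong[OF refl])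
    fix w' assume "w' \<in> set (adj w)"
    then have "w' < n" using ch_lt[OF v] by (simp add: w_def)
    moreover have "set pth = insert w (set (tl pth))" using v unfolding valid_def w_def
      by (cases pth) auto
    ultimately show "(w' \<in> S \<and> w' \<noteq> w) = (inG w' \<and> w' \<notin> set pth)"
      unfolding S_def Sp_def Vg_def by auto
  qed
  have Spc: "Sp (w' # pth) = S - {w}" for w'
    using v unfolding Sp_def S_def w_def valid_def by (cases pth) auto
  have Pc: "P (w' # pth) = Zs lam n adj (S - {w} - {w'}) / Zs lam n adj (S - {w})" for w'
    unfolding P_def Spc by simp
  have mr: "Zs lam n adj S = Zs lam n adj (S - {w}) +
     lam * sum_list (map (\<lambda>w'. Zs lam n adj (S - {w} - {w'})) (ch pth))"
    using MR[OF mg md wS Sp_sub[of pth, folded S_def]] unfolding filt .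
  define Z0 where "Z0 = Zs lam n adj (S - {w})"
  have Z0: "Z0 > 0" unfolding Z0_def by (rule Zs_pos)
  have "P pth = Z0 / (Z0 + lam * sum_list (map (\<lambda>w'. Zs lam n adj (S - {w} - {w'})) (ch pth)))"
    unfolding P_def S_def[symmetric] w_def[symmetric] Z0_def mr by simp
  also have "\<dots> = 1 / (1 + lam * (sum_list (map (\<lambda>w'. Zs lam n adj (S - {w} - {w'})) (ch pth)) / Z0))"
    using Z0 by (simp add: field_simps)
  also have "\<dots> = 1 / (1 + lam * sum_list (map (\<lambda>w'. P (w' # pth)) (ch pth)))"
    unfolding Pc Z0_def sum_list_div by simp
  finally show ?thesis .
qed

lemma P_le1: "valid pth \<Longrightarrow> 0 < P pth \<and> P pth \<le> 1"
proof -
  assume v: "valid pth"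
  define S where "S = Sp pth"
  define w where "w = hd pth"
  have wS: "w \<in> S" using hd_in_Sp[OF v] by (simp add: S_def w_def)
  have mr: "Zs lam n adj S = Zs lam n adj (S - {w}) +
     lam * sum_list (map (\<lambda>w'. Zs lam n adj (S - {w} - {w'})) (filter (\<lambda>w'. w' \<in> S \<and> w' \<noteq> w) (adj w)))"
    using MR[OF mg md wS Sp_sub[of pth, folded S_def]] .
  have "0 \<le> sum_list (map (\<lambda>w'. Zs lam n adj (S - {w} - {w'})) (filter (\<lambda>w'. w' \<in> S \<and> w' \<noteq> w) (adj w)))"
    using Zs_pos by (intro sum_list_nonneg) (auto intro: less_imp_le)
  then have "Zs lam n adj (S - {w}) \<le> Zs lam n adj S" using mr lam by simp
  then show ?thesis unfolding P_def S_def[symmetric] w_def[symmetric]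
    using Zs_pos[of S] Zs_pos[of "S - {w}"] by (simp add: divide_le_eq)
qed

lemma P_range: "valid pth \<Longrightarrow> q \<le> P pth \<and> P pth \<le> 1"
proof -
  assume v: "valid pth"
  have "0 \<le> sum_list (map (\<lambda>w'. P (w' # pth)) (ch pth)) \<and> sum_list (map (\<lambda>w'. P (w' # pth)) (ch pth)) \<le> length (ch pth)"
    using P_le1 child_valid[OF v] by (intro sum_list_01) (auto intro: less_imp_le)
  then have "q \<le> P pth" unfolding P_rec[OF v] q_def
    using f_range[OF lam, of _ \<Delta>] len_ch[OF v] by (meson of_nat_le_iff order_trans)
  then show ?thesis using P_le1[OF v] by simp
qed

lemma TV_range: "valid pth \<Longrightarrow> q \<le> TV h pth \<and> TV h pth \<le> 1"
proof (induct h arbitrary: pth)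
  case 0 then show ?case using q_pos unfolding TV_0 q_def using lam by (simp add: add_pos_nonneg)
next
  case (Suc h)
  have "0 \<le> sum_list (map (\<lambda>w'. TV h (w' # pth)) (ch pth)) \<and> sum_list (map (\<lambda>w'. TV h (w' # pth)) (ch pth)) \<le> length (ch pth)"
    using Suc.hyps child_valid[OF Suc.prems] q_pos by (intro sum_list_01) (meson less_le_trans less_imp_le)
  then show ?case unfolding TV_Suc q_def
    using f_range[OF lam, of _ \<Delta>] len_ch[OF Suc.prems] by (meson of_nat_le_iff order_trans)
qed

lemma interlace: "valid pth \<Longrightarrow> (even h \<longrightarrow> P pth \<le> TV h pth) \<and> (odd h \<longrightarrow> TV h pth \<le> P pth)"
proof (induct h arbitrary: pth)
  case 0 then show ?case using P_range[OF 0] by (simp add: TV_0)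
next
  case (Suc h)
  have v: "\<And>c. c \<in> set (ch pth) \<Longrightarrow> valid (c # pth)" using child_valid[OF Suc.prems] .
  have P0: "0 \<le> sum_list (map (\<lambda>w'. P (w' # pth)) (ch pth))"
    using P_le1 v by (intro sum_list_nonneg) (auto intro: less_imp_le)
  have T0: "0 \<le> sum_list (map (\<lambda>w'. TV h (w' # pth)) (ch pth))"
  proof (rule sum_list_nonneg)
    fix x assume "x \<in> set (map (\<lambda>w'. TV h (w' # pth)) (ch pth))"
    then obtain c where "c \<in> set (ch pth)" "x = TV h (c # pth)" by auto
    then show "0 \<le> x" using TV_range[OF v[of c], of h] q_pos by linarith
  qed
  show ?case
  proof (cases "even h")
    case True
    have "sum_list (map (\<lambda>w'. P (w' # pth)) (ch pth)) \<le> sum_list (map (\<lambda>w'. TV h (w' # pth)) (ch pth))"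
      using Suc.hyps v True by (intro sum_list_mono) auto
    then show ?thesis using True unfolding TV_Suc P_rec[OF Suc.prems] using f_anti[OF lam P0] by simp
  next
    case False
    have "sum_list (map (\<lambda>w'. TV h (w' # pth)) (ch pth)) \<le> sum_list (map (\<lambda>w'. P (w' # pth)) (ch pth))"
      using Suc.hyps v False by (intro sum_list_mono) auto
    then show ?thesis using False unfolding TV_Suc P_rec[OF Suc.prems] using f_anti[OF lam T0] by simp
  qed
qed

lemma decay: "valid pth \<Longrightarrow> \<bar>ln (TV h pth) - ln (P pth)\<bar> \<le> B * \<rho> ^ (h div 2)"
proof (induct h arbitrary: pth rule: less_induct)
  case (less h)
  show ?case
  proof (cases "h < 2")
    case True
    then have "h div 2 = 0" by simp
    then show ?thesis using ln_range[OF q_pos] TV_range[OF less.prems, of h] P_range[OF less.prems]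
      unfolding B_q by simp
  next
    case False
    then obtain h' where h: "h = Suc (Suc h')" by (metis add_2_eq_Suc le_Suc_ex not_less)
    define D where "D = B * \<rho> ^ (h' div 2)"
    have D0: "D \<ge> 0" unfolding D_def using B_nonneg rho_range by simp
    define cs where "cs = ch pth"
    have vc: "\<And>c. c \<in> set cs \<Longrightarrow> valid (c # pth)" unfolding cs_def using child_valid[OF less.prems] .
    define a where "a c = lam * sum_list (map (\<lambda>g. TV h' (g # c # pth)) (ch (c # pth)))" for c
    define s where "s c = lam * sum_list (map (\<lambda>g. P (g # c # pth)) (ch (c # pth)))" for c
    have TVe: "TV h pth = 1 / (1 + lam * sum_list (map (\<lambda>c. 1 / (1 + a c)) cs))"
      unfolding h TV_Suc a_def cs_def ..
    have Pe: "P pth = 1 / (1 + lam * sum_list (map (\<lambda>c. 1 / (1 + s c)) cs))"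
      unfolding P_rec[OF less.prems] s_def cs_def
      by (rule arg_cong[where f="\<lambda>x. 1 / (1 + lam * x)"], rule arg_cong[where f=sum_list],
          rule map_cong[OF refl], rule P_rec, rule child_valid[OF less.prems])
    have gc: "\<bar>ln (TV h' (g # c # pth)) - ln (P (g # c # pth))\<bar> \<le> D"
      if "c \<in> set cs" "g \<in> set (ch (c # pth))" for c g
      unfolding D_def using less.hyps[of h' "g # c # pth"] h child_valid[OF vc[OF that(1)] that(2)] by simp
    have gcb: "exp (-D) * P (g # c # pth) \<le> TV h' (g # c # pth) \<and> TV h' (g # c # pth) \<le> exp D * P (g # c # pth)"
      if "c \<in> set cs" "g \<in> set (ch (c # pth))" for c g
    proof (rule ln_ratio[OF _ _ gc[OF that]])
      have v: "valid (g # c # pth)" using child_valid[OF vc[OF that(1)] that(2)] .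
      show "0 < TV h' (g # c # pth)" using TV_range[OF v] q_pos by (meson less_le_trans)
      show "0 < P (g # c # pth)" using P_le1[OF v] by simp
    qed
    have s0: "s c \<ge> 0" if "c \<in> set cs" for c
    proof -
      have "0 \<le> sum_list (map (\<lambda>g. P (g # c # pth)) (ch (c # pth)))"
        using P_le1 child_valid[OF vc[OF that]] by (intro sum_list_nonneg) (auto intro: less_imp_le)
      then show ?thesis unfolding s_def using lam by simp
    qed
    have lo: "exp (-D) * s c \<le> a c" if "c \<in> set cs" for c
    proof -
      have "exp (-D) * s c = lam * sum_list (map (\<lambda>g. exp (-D) * P (g # c # pth)) (ch (c # pth)))"
        unfolding s_def sum_list_cmult by simp
      also have "\<dots> \<le> a c" unfolding a_def using lam gcb[OF that]
        by (intro mult_left_mono sum_list_mono) auto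
      finally show ?thesis .
    qed
    have hi: "a c \<le> exp D * s c" if "c \<in> set cs" for c
    proof -
      have "a c \<le> lam * sum_list (map (\<lambda>g. exp D * P (g # c # pth)) (ch (c # pth)))"
        unfolding a_def using lam gcb[OF that]
        by (intro mult_left_mono sum_list_mono) auto
      also have "\<dots> = exp D * s c" unfolding s_def sum_list_cmult by simp
      finally show ?thesis .
    qed
    have "\<bar>ln (TV h pth) - ln (P pth)\<bar> \<le> \<rho> * D"
      unfolding TVe Pe \<rho>_def
      by (rule two_step[OF lam D0 len_ch[OF less.prems, folded cs_def] s0 lo hi])
    also have "\<rho> * D = B * \<rho> ^ (h div 2)" unfolding D_def h by simp
    finally show ?thesis .
  qed
qed

lemma decay_diff:
  assumes v: "valid pth" and h: "h \<ge> 1"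
  shows "\<bar>ln (TV h pth) - ln (TV (h - 1) pth)\<bar> \<le> 2 * B * \<rho> ^ ((h - 1) div 2)"
proof -
  have "B * \<rho> ^ (h div 2) \<le> B * \<rho> ^ ((h - 1) div 2)"
    using B_nonneg rho_range by (intro mult_left_mono power_decreasing) (auto simp: div_le_mono)
  then show ?thesis using decay[OF v, of h] decay[OF v, of "h - 1"] by linarith
qed

lemma accuracy:
  assumes v: "valid pth" and h: "h \<ge> 1"
  shows "\<bar>ln (TV h pth) - ln (P pth)\<bar> \<le> \<bar>ln (TV h pth) - ln (TV (h - 1) pth)\<bar>"
proof -
  have pos: "0 < TV h pth" "0 < TV (h - 1) pth" "0 < P pth"
    using TV_range[OF v] P_le1[OF v] q_pos by (meson less_le_trans)+
  have "(TV h pth \<le> P pth \<and> P pth \<le> TV (h - 1) pth) \<or> (TV (h - 1) pth \<le> P pth \<and> P pth \<le> TV h pth)"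
    using interlace[OF v, of h] interlace[OF v, of "h - 1"] h by (cases "even h") auto
  then show ?thesis using pos by auto
qed

end


lemma of_nat_sum_list_map: "real (sum_list (map f xs)) = sum_list (map (\<lambda>x. real (f x)) xs)"
  by (induct xs) auto

lemma sum_list_le_const:
  fixes f :: "'a \<Rightarrow> real" and M :: real
  assumes "\<And>x. x \<in> set xs \<Longrightarrow> f x \<le> M"
  shows "sum_list (map f xs) \<le> real (length xs) * M"
proof -
  have "sum_list (map f xs) \<le> sum_list (map (\<lambda>x. M) xs)" using assms by (intro sum_list_mono) auto
  also have "\<dots> = real (length xs) * M" by (induct xs) (auto simp: algebra_simps)
  finally show ?thesis .
qed

context tree
begin

lemma cost: "valid pth \<Longrightarrow> real (snd (tree_val lam adj inG h pth (hd pth))) \<le> (real \<Delta> + 2) ^ h - 1"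
proof (induct h arbitrary: pth)
  case 0 then show ?case by simp
next
  case (Suc h)
  define X where "X = (real \<Delta> + 2) ^ h"
  have X1: "X \<ge> 1" unfolding X_def by simp
  have e: "snd (tree_val lam adj inG (Suc h) pth (hd pth)) =
     1 + length (adj (hd pth)) + sum_list (map (\<lambda>w'. snd (tree_val lam adj inG h (w' # pth) (hd (w' # pth)))) (ch pth))"
    unfolding ch_def by (simp add: Let_def comp_def)
  have deg: "length (adj (hd pth)) \<le> \<Delta>" using md valid_hd[OF Suc.prems] unfolding max_degree_le_def by auto
  have "sum_list (map (\<lambda>w'. real (snd (tree_val lam adj inG h (w' # pth) (hd (w' # pth))))) (ch pth))
        \<le> length (ch pth) * (X - 1)"
  proof (rule sum_list_le_const)
    fix x assume "x \<in> set (ch pth)"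
    from Suc.hyps[OF child_valid[OF Suc.prems this]]
    show "real (snd (tree_val lam adj inG h (x # pth) (hd (x # pth)))) \<le> X - 1" unfolding X_def by simp
  qed
  also have "\<dots> \<le> \<Delta> * (X - 1)" using len_ch[OF Suc.prems] X1 by (intro mult_right_mono) auto
  finally have s: "sum_list (map (\<lambda>w'. real (snd (tree_val lam adj inG h (w' # pth) (hd (w' # pth))))) (ch pth))
        \<le> \<Delta> * (X - 1)" .
  have "real (snd (tree_val lam adj inG (Suc h) pth (hd pth))) \<le> 1 + \<Delta> + \<Delta> * (X - 1)"
    unfolding e using s deg by (simp add: of_nat_sum_list_map)
  also have "\<dots> \<le> (real \<Delta> + 2) ^ Suc h - 1" using X1 unfolding X_def by (simp add: algebra_simps)
  finally show ?case .
qed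

lemma vertex:
  fixes \<sigma> :: "nat \<Rightarrow> nat" and \<epsilon> :: real and H0 :: nat
  assumes inG: "inG = (\<lambda>v. \<sigma> u \<le> \<sigma> v)" and u: "u < n" and H0: "2 \<le> H0"
    and H0b: "2 * B * \<rho> ^ ((H0 - 1) div 2) \<le> \<epsilon> / (2 * exp 1)"
  shows "(\<exists>h. stop_cond lam \<epsilon> adj \<sigma> u h) \<and> q \<le> p_est lam \<epsilon> adj \<sigma> u \<and> p_est lam \<epsilon> adj \<sigma> u \<le> 1 \<and>
    \<bar>ln (p_est lam \<epsilon> adj \<sigma> u) - ln (Zs lam n adj ({v. v < n \<and> \<sigma> u \<le> \<sigma> v} - {u}) / Zs lam n adj {v. v < n \<and> \<sigma> u \<le> \<sigma> v})\<bar> \<le> \<epsilon> / (2 * exp 1) \<and>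
    (\<exists>m. queries_u lam \<epsilon> adj \<sigma> u = enat m \<and> real m \<le> real H0 * (real \<Delta> + 2) ^ H0)"
proof -
  have v: "valid [u]" unfolding valid_def Vg_def using u inG by simp
  have xv: "xval lam adj \<sigma> u h = tree_val lam adj inG h [u] (hd [u])" for h
    unfolding xval_def inG by simp
  have fx: "fst (xval lam adj \<sigma> u h) = TV h [u]" for h unfolding xv TV_def ..
  have st: "stop_cond lam \<epsilon> adj \<sigma> u h \<longleftrightarrow> h \<ge> 2 \<and> \<bar>ln (TV h [u]) - ln (TV (h - 1) [u])\<bar> \<le> \<epsilon> / (2 * exp 1)" for h
    unfolding stop_cond_def fx ..
  have stH0: "stop_cond lam \<epsilon> adj \<sigma> u H0"
    unfolding st using H0 decay_diff[OF v, of H0] H0b by auto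
  then have ex: "\<exists>h. stop_cond lam \<epsilon> adj \<sigma> u h" by blast
  define Hs where "Hs = (LEAST h. stop_cond lam \<epsilon> adj \<sigma> u h)"
  have stHs: "stop_cond lam \<epsilon> adj \<sigma> u Hs" unfolding Hs_def by (rule LeastI_ex[OF ex])
  have HsH0: "Hs \<le> H0" unfolding Hs_def by (rule Least_le) (rule stH0)
  have Hs2: "Hs \<ge> 2" using stHs st by auto
  have pe: "p_est lam \<epsilon> adj \<sigma> u = TV Hs [u]" unfolding p_est_def using ex fx by (simp add: Hs_def)
  have acc: "\<bar>ln (TV Hs [u]) - ln (P [u])\<bar> \<le> \<epsilon> / (2 * exp 1)"
    using accuracy[OF v, of Hs] Hs2 stHs st by auto
  have Pu: "P [u] = Zs lam n adj ({v. v < n \<and> \<sigma> u \<le> \<sigma> v} - {u}) / Zs lam n adj {v. v < n \<and> \<sigma> u \<le> \<sigma> v}"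
    unfolding P_def Sp_def Vg_def using inG by simp
  define m where "m = (\<Sum>h\<in>{1..Hs}. snd (xval lam adj \<sigma> u h))"
  have qu: "queries_u lam \<epsilon> adj \<sigma> u = enat m" unfolding queries_u_def m_def Hs_def using ex by simp
  have "real m = (\<Sum>h\<in>{1..Hs}. real (snd (xval lam adj \<sigma> u h)))" unfolding m_def by simp
  also have "\<dots> \<le> (\<Sum>h\<in>{1..Hs}. (real \<Delta> + 2) ^ H0)"
  proof (rule sum_mono)
    fix h assume h: "h \<in> {1..Hs}"
    have "real (snd (xval lam adj \<sigma> u h)) \<le> (real \<Delta> + 2) ^ h - 1" unfolding xv by (rule cost[OF v])
    also have "\<dots> \<le> (real \<Delta> + 2) ^ H0"
    proof -
      have "(real \<Delta> + 2) ^ h \<le> (real \<Delta> + 2) ^ H0" using h HsH0 by (intro power_increasing) auto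
      then show ?thesis by linarith
    qed
    finally show "real (snd (xval lam adj \<sigma> u h)) \<le> (real \<Delta> + 2) ^ H0" .
  qed
  also have "\<dots> = Hs * (real \<Delta> + 2) ^ H0" by simp
  also have "\<dots> \<le> H0 * (real \<Delta> + 2) ^ H0" using HsH0 by (intro mult_right_mono) auto
  finally have mb: "real m \<le> real H0 * (real \<Delta> + 2) ^ H0" .
  show ?thesis using ex pe TV_range[OF v, of Hs] acc Pu qu mb by auto
qed

end

lemma telescope:
  assumes \<sigma>: "\<sigma> permutes {..<n}" and md: "max_degree_le n adj \<Delta>" and lam: "lam > 0"
  shows "(\<Sum>u<n. - ln (Zs lam n adj ({v. v < n \<and> \<sigma> u \<le> \<sigma> v} - {u}) / Zs lam n adj {v. v < n \<and> \<sigma> u \<le> \<sigma> v}))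
         = ln (Z n adj lam)"
proof -
  define T where "T k = {v. v < n \<and> k \<le> \<sigma> v}" for k
  define L where "L k = ln (Zs lam n adj (T k))" for k
  have Zp: "Zs lam n adj S > 0" for S using Zs_ge1[OF md lam] by (meson less_le_trans zero_less_one)
  have inj: "inj_on \<sigma> {..<n}" using \<sigma> permutes_inj_on by blast
  have img: "\<sigma> ` {..<n} = {..<n}" using \<sigma> permutes_image by blast
  have Tm: "T (\<sigma> u) - {u} = T (Suc (\<sigma> u))" if u: "u < n" for u
  proof -
    have "\<sigma> v = \<sigma> u \<Longrightarrow> v < n \<Longrightarrow> v = u" for v using inj u by (meson inj_onD lessThan_iff)
    then show ?thesis unfolding T_def by auto (metis le_antisym not_less_eq_eq)
  qed
  have "(\<Sum>u<n. - ln (Zs lam n adj ({v. v < n \<and> \<sigma> u \<le> \<sigma> v} - {u}) / Zs lam n adj {v. v < n \<and> \<sigma> u \<le> \<sigma> v}))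
      = (\<Sum>u<n. L (\<sigma> u) - L (Suc (\<sigma> u)))"
  proof (rule sum.cong[OF refl])
    fix u assume "u \<in> {..<n}"
    then have u: "u < n" by simp
    have "- ln (Zs lam n adj (T (\<sigma> u) - {u}) / Zs lam n adj (T (\<sigma> u))) = L (\<sigma> u) - L (Suc (\<sigma> u))"
      unfolding L_def Tm[OF u] using Zp[of "T (\<sigma> u)"] Zp[of "T (Suc (\<sigma> u))"] by (simp add: ln_div)
    then show "- ln (Zs lam n adj ({v. v < n \<and> \<sigma> u \<le> \<sigma> v} - {u}) / Zs lam n adj {v. v < n \<and> \<sigma> u \<le> \<sigma> v})
      = L (\<sigma> u) - L (Suc (\<sigma> u))" unfolding T_def .
  qed
  also have "\<dots> = (\<Sum>k<n. L k - L (Suc k))"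
    using sum.reindex[OF inj, of "\<lambda>k. L k - L (Suc k)"] img by simp
  also have "\<dots> = L 0 - L n" by (rule sum_lessThan_telescope')
  also have "L n = 0" unfolding L_def T_def
  proof -
    have "\<sigma> v < n" if "v < n" for v using img that by blast
    then have E0: "{v. v < n \<and> n \<le> \<sigma> v} = {}" by (auto simp: not_le)
    show "ln (Zs lam n adj {v. v < n \<and> n \<le> \<sigma> v}) = 0" by (simp only: E0 Zs_empty ln_one)
  qed
  also have "T 0 = {..<n}" unfolding T_def by auto
  then have "L 0 = ln (Z n adj lam)" unfolding L_def Z_Zs by simp
  finally show ?thesis by simp
qed



definition Ls :: "'a set \<Rightarrow> nat \<Rightarrow> 'a list set" where
  "Ls A s = {xs. set xs \<subseteq> A \<and> length xs = s}"

lemma Ls_finite: "finite A \<Longrightarrow> finite (Ls A s)" unfolding Ls_def by (rule finite_lists_length_eq)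
lemma Ls_card: "finite A \<Longrightarrow> card (Ls A s) = card A ^ s" unfolding Ls_def by (rule card_lists_length_eq)

lemma Ls_Suc: "Ls A (Suc s) = (\<lambda>(x, U). x # U) ` (A \<times> Ls A s)"
proof (intro equalityI subsetI)
  fix U assume "U \<in> Ls A (Suc s)"
  then obtain x U' where "U = x # U'" "x \<in> A" "U' \<in> Ls A s" unfolding Ls_def
    by (cases U) auto
  then show "U \<in> (\<lambda>(x, U). x # U) ` (A \<times> Ls A s)" by force
qed (auto simp: Ls_def)

lemma Ls_Suc_sum:
  fixes g :: "'a list \<Rightarrow> real"
  assumes "finite A"
  shows "(\<Sum>U\<in>Ls A (Suc s). g U) = (\<Sum>x\<in>A. \<Sum>U\<in>Ls A s. g (x # U))"
proof -
  have inj: "inj_on (\<lambda>(x, U). x # U) (A \<times> Ls A s)" by (rule inj_onI) auto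
  have "(\<Sum>U\<in>Ls A (Suc s). g U) = (\<Sum>p\<in>A \<times> Ls A s. g (case p of (x, U) \<Rightarrow> x # U))"
    unfolding Ls_Suc by (rule sum.reindex[OF inj, unfolded comp_def])
  also have "\<dots> = (\<Sum>x\<in>A. \<Sum>U\<in>Ls A s. g (x # U))"
    by (simp add: sum.cartesian_product split_def)
  finally show ?thesis .
qed

lemma second_moment:
  fixes Z :: "'a \<Rightarrow> real"
  assumes fin: "finite A" and z: "(\<Sum>x\<in>A. Z x) = 0"
  shows "real (card A) * (\<Sum>U\<in>Ls A s. (sum_list (map Z U))\<^sup>2) = real s * real (card A) ^ s * (\<Sum>x\<in>A. (Z x)\<^sup>2)"
proof (induct s)
  case 0
  have "Ls A 0 = {[]}" unfolding Ls_def by auto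
  then show ?case by simp
next
  case (Suc s)
  define T where "T U = sum_list (map Z U)" for U
  define c where "c = real (card A)"
  have "(\<Sum>U\<in>Ls A (Suc s). (T U)\<^sup>2) = (\<Sum>x\<in>A. \<Sum>U\<in>Ls A s. (Z x + T U)\<^sup>2)"
    unfolding Ls_Suc_sum[OF fin] T_def by simp
  also have "\<dots> = (\<Sum>x\<in>A. \<Sum>U\<in>Ls A s. (Z x)\<^sup>2 + 2 * Z x * T U + (T U)\<^sup>2)"
    by (intro sum.cong refl) (simp add: power2_sum algebra_simps)
  also have "\<dots> = (\<Sum>x\<in>A. real (card (Ls A s)) * (Z x)\<^sup>2 + 2 * Z x * (\<Sum>U\<in>Ls A s. T U) + (\<Sum>U\<in>Ls A s. (T U)\<^sup>2))"
    by (simp add: sum.distrib sum_distrib_left mult.assoc)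
  also have "\<dots> = real (card (Ls A s)) * (\<Sum>x\<in>A. (Z x)\<^sup>2) + 2 * (\<Sum>x\<in>A. Z x) * (\<Sum>U\<in>Ls A s. T U) + c * (\<Sum>U\<in>Ls A s. (T U)\<^sup>2)"
    by (simp add: sum.distrib sum_distrib_left sum_distrib_right c_def mult.assoc mult.commute)
  also have "\<dots> = c ^ s * (\<Sum>x\<in>A. (Z x)\<^sup>2) + c * (\<Sum>U\<in>Ls A s. (T U)\<^sup>2)"
    using z Ls_card[OF fin, of s] by (simp add: c_def)
  finally have e: "(\<Sum>U\<in>Ls A (Suc s). (T U)\<^sup>2) = c ^ s * (\<Sum>x\<in>A. (Z x)\<^sup>2) + c * (\<Sum>U\<in>Ls A s. (T U)\<^sup>2)" .
  have ih: "c * (\<Sum>U\<in>Ls A s. (T U)\<^sup>2) = real s * c ^ s * (\<Sum>x\<in>A. (Z x)\<^sup>2)"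
    using Suc unfolding T_def c_def .
  show ?case unfolding T_def[symmetric] c_def[symmetric] e
    by (simp add: algebra_simps ih)
qed

lemma sample_good:
  fixes Y :: "nat \<Rightarrow> real" and B \<epsilon> :: real and n s :: nat
  assumes n: "n \<ge> 1" and Y: "\<And>u. u < n \<Longrightarrow> 0 \<le> Y u \<and> Y u \<le> B" and s: "s \<ge> 1"
    and eps: "\<epsilon> > 0" and sb: "12 * B\<^sup>2 \<le> real s * \<epsilon>\<^sup>2"
  shows "real (card {U \<in> Ls {..<n} s. \<bar>real n / real s * sum_list (map Y U) - (\<Sum>u<n. Y u)\<bar> \<le> \<epsilon> * n / 2})
         \<ge> 2 / 3 * real (card (Ls {..<n} s))"
proof -
  define A where "A = {..<n::nat}"
  have fin: "finite A" unfolding A_def by simp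
  have cA: "card A = n" unfolding A_def by simp
  define \<mu> where "\<mu> = (\<Sum>u<n. Y u) / n"
  define Zc where "Zc u = Y u - \<mu>" for u
  have B0: "B \<ge> 0" using Y[of 0] n by auto
  have mu: "0 \<le> \<mu> \<and> \<mu> \<le> B"
  proof -
    have "0 \<le> (\<Sum>u<n. Y u)" using Y by (intro sum_nonneg) auto
    moreover have "(\<Sum>u<n. Y u) \<le> (\<Sum>u<n. B)" using Y by (intro sum_mono) auto
    ultimately show ?thesis unfolding \<mu>_def using n by (auto simp: divide_le_eq mult.commute)
  qed
  have zsum: "(\<Sum>x\<in>A. Zc x) = 0" unfolding A_def Zc_def \<mu>_def using n by (simp add: sum_subtractf)
  have zb: "(Zc u)\<^sup>2 \<le> B\<^sup>2" if "u \<in> A" for u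
  proof -
    have "\<bar>Zc u\<bar> \<le> B" using Y[of u] mu that unfolding Zc_def A_def by auto
    then show ?thesis by (metis abs_ge_zero power2_abs power_mono)
  qed
  have "(\<Sum>x\<in>A. (Zc x)\<^sup>2) \<le> (\<Sum>x\<in>A. B\<^sup>2)" by (rule sum_mono) (rule zb)
  then have SZ: "(\<Sum>x\<in>A. (Zc x)\<^sup>2) \<le> n * B\<^sup>2" using cA by simp
  define L where "L = Ls A s"
  have finL: "finite L" unfolding L_def using Ls_finite[OF fin] .
  have cL: "real (card L) = real n ^ s" unfolding L_def using Ls_card[OF fin] cA by simp
  have sm: "real n * (\<Sum>U\<in>L. (sum_list (map Zc U))\<^sup>2) = real s * real n ^ s * (\<Sum>x\<in>A. (Zc x)\<^sup>2)"
    using second_moment[OF fin zsum, of s] cA unfolding L_def by simp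
  have sm2: "(\<Sum>U\<in>L. (sum_list (map Zc U))\<^sup>2) \<le> real s * real n ^ s * B\<^sup>2"
  proof -
    have "real n * (\<Sum>U\<in>L. (sum_list (map Zc U))\<^sup>2) \<le> real s * real n ^ s * (n * B\<^sup>2)"
      unfolding sm using SZ by (intro mult_left_mono) auto
    then show ?thesis using n by (simp add: algebra_simps)
  qed
  have key: "sum_list (map Y U) - real s * \<mu> = sum_list (map Zc U)" if "U \<in> L" for U
  proof -
    have "length U = s" using that unfolding L_def Ls_def by auto
    then show ?thesis unfolding Zc_def by (induct U arbitrary: s) (auto simp: algebra_simps)
  qed
  define Bad where "Bad = {U \<in> L. \<bar>sum_list (map Zc U)\<bar> > real s * \<epsilon> / 2}"
  have good: "{U \<in> L. \<bar>real n / real s * sum_list (map Y U) - (\<Sum>u<n. Y u)\<bar> \<le> \<epsilon> * n / 2} = L - Bad"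
  proof -
    have "\<bar>real n / real s * sum_list (map Y U) - (\<Sum>u<n. Y u)\<bar> = real n / real s * \<bar>sum_list (map Zc U)\<bar>"
      if "U \<in> L" for U
    proof -
      have "real n / real s * sum_list (map Y U) - (\<Sum>u<n. Y u) = real n / real s * (sum_list (map Y U) - real s * \<mu>)"
        using n s unfolding \<mu>_def by (simp add: field_simps)
      then show ?thesis using key[OF that] by (simp add: abs_mult)
    qed
    moreover have "real n / real s * x \<le> \<epsilon> * n / 2 \<longleftrightarrow> x \<le> real s * \<epsilon> / 2" for x
      using n s by (simp add: field_simps)
    ultimately show ?thesis unfolding Bad_def by (auto simp: not_less)
  qed
  have BadL: "Bad \<subseteq> L" unfolding Bad_def by auto
  have finB: "finite Bad" using finL BadL by (rule finite_subset[rotated])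
  have "real (card Bad) * (real s * \<epsilon> / 2)\<^sup>2 = (\<Sum>U\<in>Bad. (real s * \<epsilon> / 2)\<^sup>2)" by simp
  also have "\<dots> \<le> (\<Sum>U\<in>Bad. (sum_list (map Zc U))\<^sup>2)"
  proof (rule sum_mono)
    fix U assume "U \<in> Bad"
    then have "real s * \<epsilon> / 2 \<le> \<bar>sum_list (map Zc U)\<bar>" unfolding Bad_def by auto
    moreover have "0 \<le> real s * \<epsilon> / 2" using eps by simp
    ultimately show "(real s * \<epsilon> / 2)\<^sup>2 \<le> (sum_list (map Zc U))\<^sup>2"
      by (metis power2_abs power_mono)
  qed
  also have "\<dots> \<le> (\<Sum>U\<in>L. (sum_list (map Zc U))\<^sup>2)"
    using finL BadL by (intro sum_mono2) auto
  also have "\<dots> \<le> real s * real n ^ s * B\<^sup>2" by (rule sm2)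
  also have "\<dots> \<le> real s * real n ^ s * (real s * \<epsilon>\<^sup>2 / 12)"
    using sb by (intro mult_left_mono) auto
  finally have Le: "real (card Bad) * (real s * \<epsilon> / 2)\<^sup>2 \<le> real s * real n ^ s * (real s * \<epsilon>\<^sup>2 / 12)" .
  have eqA: "real (card Bad) * (real s * \<epsilon> / 2)\<^sup>2 = (real s * \<epsilon>)\<^sup>2 * (real (card Bad) / 4)"
    by (simp add: power2_eq_square)
  have eqB: "real s * real n ^ s * (real s * \<epsilon>\<^sup>2 / 12) = (real s * \<epsilon>)\<^sup>2 * (real n ^ s / 12)"
    by (simp add: power2_eq_square)
  have "(real s * \<epsilon>)\<^sup>2 * (real (card Bad) / 4) \<le> (real s * \<epsilon>)\<^sup>2 * (real n ^ s / 12)"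
    using Le unfolding eqA eqB .
  moreover have "(real s * \<epsilon>)\<^sup>2 > 0" using s eps by simp
  ultimately have "real (card Bad) / 4 \<le> real n ^ s / 12"
    by (meson mult_left_le_imp_le)
  then have cb': "real (card Bad) \<le> real n ^ s / 3" by simp
  have "real (card (L - Bad)) = real (card L) - real (card Bad)"
    using card_Diff_subset[OF finB BadL] card_mono[OF finL BadL] by (simp add: of_nat_diff)
  also have "\<dots> \<ge> 2 / 3 * real (card L)" using cb' cL by simp
  finally have fin_ge: "2 / 3 * real (card L) \<le> real (card (L - Bad))" .
  have tgt: "{U \<in> Ls {..<n} s. \<bar>real n / real s * sum_list (map Y U) - (\<Sum>u<n. Y u)\<bar> \<le> \<epsilon> * n / 2} = L - Bad"
    using good unfolding L_def A_def .
  show ?thesis using fin_ge unfolding tgt L_def A_def .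
qed

lemma pair_pmf_of_set:
  assumes "finite A" "A \<noteq> {}" "finite B" "B \<noteq> {}"
  shows "pair_pmf (pmf_of_set A) (pmf_of_set B) = pmf_of_set (A \<times> B)"
proof (rule pmf_eqI)
  fix p :: "'a \<times> 'b"
  obtain a b where p: "p = (a, b)" by (cases p)
  show "pmf (pair_pmf (pmf_of_set A) (pmf_of_set B)) p = pmf (pmf_of_set (A \<times> B)) p"
    unfolding p pmf_pair using assms by (simp add: card_cartesian_product indicator_def)
qed

lemma prob_pair_good:
  fixes E :: "('a \<times> 'b) set"
  assumes fA: "finite A" "A \<noteq> {}" and fB: "finite B" "B \<noteq> {}"
    and good: "\<And>a. a \<in> A \<Longrightarrow> real (card {b \<in> B. (a, b) \<in> E}) \<ge> 2 / 3 * real (card B)"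
  shows "measure_pmf.prob (pair_pmf (pmf_of_set A) (pmf_of_set B)) E \<ge> 2 / 3"
proof -
  have ne: "A \<times> B \<noteq> {}" using fA fB by auto
  have "(A \<times> B) \<inter> E = Sigma A (\<lambda>a. {b \<in> B. (a, b) \<in> E})" by auto
  then have c: "card ((A \<times> B) \<inter> E) = (\<Sum>a\<in>A. card {b \<in> B. (a, b) \<in> E})"
    using fA fB by (simp add: card_SigmaI)
  have "real (card ((A \<times> B) \<inter> E)) \<ge> (\<Sum>a\<in>A. 2 / 3 * real (card B))"
    unfolding c of_nat_sum using good by (intro sum_mono) auto
  then have ge: "real (card ((A \<times> B) \<inter> E)) \<ge> 2 / 3 * (real (card A) * real (card B))" by simp
  have pos: "real (card A) * real (card B) > 0" using fA fB by (simp add: card_gt_0_iff)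
  have "measure_pmf.prob (pair_pmf (pmf_of_set A) (pmf_of_set B)) E = real (card ((A \<times> B) \<inter> E)) / real (card (A \<times> B))"
    unfolding pair_pmf_of_set[OF fA fB] using measure_pmf_of_set[OF ne] fA fB by (simp add: finite_cartesian_product)
  also have "\<dots> = real (card ((A \<times> B) \<inter> E)) / (real (card A) * real (card B))"
    by (simp add: card_cartesian_product)
  finally show ?thesis using ge pos by (simp add: le_divide_eq)
qed



lemma ln2_half: "ln (2::real) \<ge> 1 / 2"
proof -
  have "exp (1 / 2 :: real) \<le> 2" using exp_bound_half[of "1/2::real"] by simp
  then have "ln (exp (1/2::real)) \<le> ln 2" by (subst ln_le_cancel_iff) auto
  then show ?thesis by simp
qed

lemma stop_bound:
  fixes lam \<epsilon> B L0 r :: real and m :: nat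
  assumes lam: "lam > 0" and r: "r \<ge> 0" and B: "B \<ge> 0" and eps: "0 < \<epsilon>" "\<epsilon> < 1"
    and L0: "L0 = ln (4 * exp 1 * B + 1)"
    and m: "m = nat \<lceil>(L0 + ln (1 / \<epsilon>)) * (1 + r)\<rceil>"
  shows "2 * B * (1 - 1 / (1 + r)) ^ m \<le> \<epsilon> / (2 * exp 1)"
proof -
  define \<gamma> where "\<gamma> = 1 / (1 + r)"
  have g: "0 < \<gamma>" "\<gamma> \<le> 1" unfolding \<gamma>_def using r by auto
  have rho: "0 \<le> 1 - \<gamma>" "1 - \<gamma> \<le> exp (- \<gamma>)" using g exp_ge_add_one_self[of "-\<gamma>"] by auto
  have l0: "L0 \<ge> 0" unfolding L0 using B by simp
  have l: "ln (1 / \<epsilon>) \<ge> 0" using eps by simp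
  have mm: "real m \<ge> (L0 + ln (1 / \<epsilon>)) * (1 + r)" unfolding m by linarith
  have gm: "\<gamma> * real m \<ge> L0 + ln (1 / \<epsilon>)"
    using mm g unfolding \<gamma>_def using r by (simp add: field_simps)
  have "(1 - \<gamma>) ^ m \<le> exp (- \<gamma>) ^ m" using rho by (intro power_mono) auto
  also have "\<dots> = exp (- (\<gamma> * real m))" by (simp add: exp_of_nat_mult[symmetric] mult.commute)
  also have "\<dots> \<le> exp (- (L0 + ln (1 / \<epsilon>)))" using gm by simp
  also have "\<dots> = \<epsilon> / (4 * exp 1 * B + 1)" unfolding L0 using eps B
    by (simp add: exp_diff exp_minus ln_div add_pos_nonneg field_simps)
  finally have p: "(1 - \<gamma>) ^ m \<le> \<epsilon> / (4 * exp 1 * B + 1)" .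
  have "2 * B * (1 - \<gamma>) ^ m \<le> 2 * B * (\<epsilon> / (4 * exp 1 * B + 1))" using p B by (intro mult_left_mono) auto
  also have "\<dots> \<le> \<epsilon> / (2 * exp 1)"
    using B eps by (simp add: field_simps add_pos_nonneg)
  finally show ?thesis unfolding \<gamma>_def .
qed

lemma cost_bound:
  fixes lam \<epsilon> B L0 r C :: real and m s :: nat and \<Delta> :: nat
  assumes lam: "lam > 0" and r: "r = sqrt (lam * \<Delta>)" and L0: "L0 \<ge> 0" and eps: "0 < \<epsilon>" "\<epsilon> < 1"
    and C: "C > 0"
    and m: "m = nat \<lceil>(L0 + ln (1 / \<epsilon>)) * (1 + r)\<rceil>"
    and s: "s = nat \<lceil>C / \<epsilon>\<^sup>2\<rceil>"
  shows "real s * (real (2 * m + 1) * (real \<Delta> + 2) ^ (2 * m + 1))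
    \<le> ((C + 1) * exp (ln (real \<Delta> + 2) * (2 * (1 + r) * L0 + 3)) * (2 * (1 + r) * (L0 + 1) + 3))
       * (1 / \<epsilon>) powr ((2 * (1 + sqrt lam) + 4) * sqrt (real \<Delta> + 2) * (ln (real \<Delta> + 2)) ^ 1)
       * (2 + ln (1 / \<epsilon>)) ^ 1"
proof -
  define l where "l = ln (1 / \<epsilon>)"
  define D2 where "D2 = ln (real \<Delta> + 2)"
  have l0: "l \<ge> 0" unfolding l_def using eps by simp
  have r0: "r \<ge> 0" unfolding r using lam by simp
  have D2h: "D2 \<ge> 1 / 2"
  proof -
    have "ln 2 \<le> D2" unfolding D2_def by simp
    then show ?thesis using ln2_half by linarith
  qed
  have mle: "real m \<le> (L0 + l) * (1 + r) + 1" unfolding m l_def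
    using L0 l0 r0 l_def by (simp add: of_nat_nat)
  define H where "H = 2 * (1 + r) * (L0 + l) + 3"
  have HH: "real (2 * m + 1) \<le> H" unfolding H_def using mle by (simp add: algebra_simps)
  have H1: "real (2 * m + 1) \<le> (2 * (1 + r) * (L0 + 1) + 3) * (2 + l)"
  proof -
    have "(L0 + l) \<le> (L0 + 1) * (1 + l)" using L0 l0 by (simp add: algebra_simps)
    then have "2 * (1 + r) * (L0 + l) \<le> 2 * (1 + r) * ((L0 + 1) * (1 + l))" using r0 by (intro mult_left_mono) auto
    also have "\<dots> \<le> 2 * (1 + r) * (L0 + 1) * (2 + l)" using r0 L0 l0 by (simp add: algebra_simps mult_left_mono)
    finally show ?thesis using HH l0 unfolding H_def by (simp add: algebra_simps)
  qed
  have H2: "(real \<Delta> + 2) ^ (2 * m + 1) \<le> exp (D2 * (2 * (1 + r) * L0 + 3)) * (1 / \<epsilon>) powr (2 * (1 + r) * D2)"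
  proof -
    have "(real \<Delta> + 2) ^ (2 * m + 1) = (real \<Delta> + 2) powr (real (2 * m + 1))"
      by (rule powr_realpow[symmetric]) simp
    also have "\<dots> = exp (real (2 * m + 1) * D2)" unfolding D2_def powr_def by simp
    also have "\<dots> \<le> exp (H * D2)" using HH D2h by (intro exp_mono mult_right_mono) auto
    also have "H * D2 = D2 * (2 * (1 + r) * L0 + 3) + 2 * (1 + r) * D2 * l" unfolding H_def by (simp add: algebra_simps)
    also have "exp (D2 * (2 * (1 + r) * L0 + 3) + 2 * (1 + r) * D2 * l) = exp (D2 * (2 * (1 + r) * L0 + 3)) * (1 / \<epsilon>) powr (2 * (1 + r) * D2)"
      unfolding l_def powr_def using eps by (simp add: exp_add mult.commute)
    finally show ?thesis .
  qed
  have H3: "real s \<le> (C + 1) * (1 / \<epsilon>) powr 2"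
  proof -
    have "real s \<le> C / \<epsilon>\<^sup>2 + 1" unfolding s using C eps by (simp add: of_nat_nat)
    also have "\<dots> \<le> (C + 1) / \<epsilon>\<^sup>2" using eps C by (simp add: field_simps power_le_one)
    also have "\<dots> = (C + 1) * (1 / \<epsilon>) powr 2" using eps by (simp add: powr_numeral divide_inverse power_inverse)
    finally show ?thesis .
  qed
  have expo: "2 + 2 * (1 + r) * D2 \<le> (2 * (1 + sqrt lam) + 4) * sqrt (real \<Delta> + 2) * D2"
  proof -
    have sq1: "sqrt (real \<Delta> + 2) \<ge> 1" by simp
    have "r \<le> sqrt lam * sqrt (real \<Delta> + 2)" unfolding r using lam by (simp add: real_sqrt_mult)
    then have "1 + r \<le> sqrt (real \<Delta> + 2) + sqrt lam * sqrt (real \<Delta> + 2)" using sq1 by linarith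
    also have "\<dots> = (1 + sqrt lam) * sqrt (real \<Delta> + 2)" by (simp add: algebra_simps)
    finally have "1 + r \<le> (1 + sqrt lam) * sqrt (real \<Delta> + 2)" .
    then have "2 * (1 + r) \<le> 2 * ((1 + sqrt lam) * sqrt (real \<Delta> + 2))" by (rule mult_left_mono) simp
    then have a0: "2 * (1 + r) \<le> 2 * (1 + sqrt lam) * sqrt (real \<Delta> + 2)" by (simp only: mult.assoc)
    have a1: "2 * (1 + r) * D2 \<le> 2 * (1 + sqrt lam) * sqrt (real \<Delta> + 2) * D2"
      using D2h a0 by (intro mult_right_mono) auto
    have "2 \<le> 4 * sqrt (real \<Delta> + 2) * D2"
    proof -
      have "4 * 1 * (1/2) \<le> 4 * sqrt (real \<Delta> + 2) * D2" using sq1 D2h by (intro mult_mono) auto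
      then show ?thesis by simp
    qed
    then show ?thesis using a1 by (simp add: algebra_simps)
  qed
  have pw: "(1 / \<epsilon>) powr 2 * (1 / \<epsilon>) powr (2 * (1 + r) * D2) \<le> (1 / \<epsilon>) powr ((2 * (1 + sqrt lam) + 4) * sqrt (real \<Delta> + 2) * D2)"
    unfolding powr_add[symmetric] using expo eps by (intro powr_mono) auto
  have "real s * (real (2 * m + 1) * (real \<Delta> + 2) ^ (2 * m + 1))
     \<le> ((C + 1) * (1 / \<epsilon>) powr 2) * (((2 * (1 + r) * (L0 + 1) + 3) * (2 + l)) * (exp (D2 * (2 * (1 + r) * L0 + 3)) * (1 / \<epsilon>) powr (2 * (1 + r) * D2)))"
    using H1 H2 H3 by (intro mult_mono) (auto intro: mult_nonneg_nonneg)
  also have "\<dots> = ((C + 1) * exp (D2 * (2 * (1 + r) * L0 + 3)) * (2 * (1 + r) * (L0 + 1) + 3)) * ((1 / \<epsilon>) powr 2 * (1 / \<epsilon>) powr (2 * (1 + r) * D2)) * (2 + l)"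
    by (simp add: algebra_simps)
  also have "\<dots> \<le> ((C + 1) * exp (D2 * (2 * (1 + r) * L0 + 3)) * (2 * (1 + r) * (L0 + 1) + 3)) * (1 / \<epsilon>) powr ((2 * (1 + sqrt lam) + 4) * sqrt (real \<Delta> + 2) * D2) * (2 + l)"
    using pw C r0 L0 l0 by (intro mult_right_mono mult_left_mono) auto
  finally show ?thesis unfolding l_def D2_def by simp
qed



lemma vertex_facts:
  fixes \<sigma> :: "nat \<Rightarrow> nat" and \<epsilon> :: real and H0 :: nat
  assumes lam: "lam > 0" and mg: "multigraph n adj" and md: "max_degree_le n adj \<Delta>"
    and u: "u < n" and H0: "2 \<le> H0"
    and H0b: "2 * ln (1 + lam * \<Delta>) * (1 - 1 / (1 + sqrt (lam * \<Delta>))) ^ ((H0 - 1) div 2) \<le> \<epsilon> / (2 * exp 1)"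
  shows "(\<exists>h. stop_cond lam \<epsilon> adj \<sigma> u h) \<and> 1 / (1 + lam * \<Delta>) \<le> p_est lam \<epsilon> adj \<sigma> u \<and> p_est lam \<epsilon> adj \<sigma> u \<le> 1 \<and>
    \<bar>ln (p_est lam \<epsilon> adj \<sigma> u) - ln (Zs lam n adj ({v. v < n \<and> \<sigma> u \<le> \<sigma> v} - {u}) / Zs lam n adj {v. v < n \<and> \<sigma> u \<le> \<sigma> v})\<bar> \<le> \<epsilon> / (2 * exp 1) \<and>
    (\<exists>m. queries_u lam \<epsilon> adj \<sigma> u = enat m \<and> real m \<le> real H0 * (real \<Delta> + 2) ^ H0)"
proof -
  interpret T: tree lam n adj \<Delta> "\<lambda>v. \<sigma> u \<le> \<sigma> v" using lam mg md by unfold_locales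
  have H0b': "2 * T.B * T.\<rho> ^ ((H0 - 1) div 2) \<le> \<epsilon> / (2 * exp 1)"
    using H0b unfolding T.B_def T.\<rho>_def .
  show ?thesis using T.vertex[OF refl u H0 H0b'] unfolding T.q_def .
qed

lemma sum_list_enat:
  assumes "\<And>u. u \<in> set U \<Longrightarrow> f u = enat (g u)"
  shows "sum_list (map f U) = enat (sum_list (map g U))"
  using assms by (induct U) (auto simp: zero_enat_def)

theorem theorem1:
  fixes lam :: real
  assumes "lam > 0"
  shows "\<exists>(a::real) (k::nat). \<forall>\<Delta>::nat. \<exists>(C::real) (K::real). C > 0 \<and>
    (\<forall>(\<epsilon>::real) (n::nat) (adj :: nat \<Rightarrow> nat list).
       0 < \<epsilon> \<and> \<epsilon> < 1 \<and> 1 \<le> n \<and> multigraph n adj \<and> max_degree_le n adj \<Delta> \<longrightarrow>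
       measure_pmf.prob (apf_run lam \<epsilon> C n)
          {(\<sigma>, U). \<bar>apf_output lam \<epsilon> C n adj \<sigma> U - ln (Z n adj lam)\<bar> \<le> \<epsilon> * real n} \<ge> 2/3 \<and>
       (\<forall>(\<sigma>, U) \<in> set_pmf (apf_run lam \<epsilon> C n).
          \<exists>m::nat. apf_queries lam \<epsilon> adj \<sigma> U = enat m \<and>
            real m \<le> K * (1 / \<epsilon>) powr (a * sqrt (real \<Delta> + 2) * (ln (real \<Delta> + 2)) ^ k)
                          * (2 + ln (1 / \<epsilon>)) ^ k))"
proof -
  have lam: "lam > 0" using assms .
  show ?thesis
  proof (rule exI[of _ "2 * (1 + sqrt lam) + 4"], rule exI[of _ "1::nat"], rule allI)
    fix \<Delta> :: nat
    define B where "B = ln (1 + lam * \<Delta>)"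
    define r where "r = sqrt (lam * \<Delta>)"
    define L0 where "L0 = ln (4 * exp 1 * B + 1)"
    define C where "C = 12 * B\<^sup>2 + 1"
    define K where "K = (C + 1) * exp (ln (real \<Delta> + 2) * (2 * (1 + r) * L0 + 3)) * (2 * (1 + r) * (L0 + 1) + 3)"
    have B0: "B \<ge> 0" unfolding B_def using lam by simp
    have r0: "r \<ge> 0" unfolding r_def using lam by simp
    have L00: "L0 \<ge> 0" unfolding L0_def using B0 by simp
    have C0: "C > 0" unfolding C_def by (simp add: add_nonneg_pos)
    show "\<exists>C K. C > 0 \<and>
    (\<forall>(\<epsilon>::real) (n::nat) (adj :: nat \<Rightarrow> nat list).
       0 < \<epsilon> \<and> \<epsilon> < 1 \<and> 1 \<le> n \<and> multigraph n adj \<and> max_degree_le n adj \<Delta> \<longrightarrow>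
       measure_pmf.prob (apf_run lam \<epsilon> C n)
          {(\<sigma>, U). \<bar>apf_output lam \<epsilon> C n adj \<sigma> U - ln (Z n adj lam)\<bar> \<le> \<epsilon> * real n} \<ge> 2/3 \<and>
       (\<forall>(\<sigma>, U) \<in> set_pmf (apf_run lam \<epsilon> C n).
          \<exists>m::nat. apf_queries lam \<epsilon> adj \<sigma> U = enat m \<and>
            real m \<le> K * (1 / \<epsilon>) powr ((2 * (1 + sqrt lam) + 4) * sqrt (real \<Delta> + 2) * (ln (real \<Delta> + 2)) ^ 1)
                          * (2 + ln (1 / \<epsilon>)) ^ 1))"
    proof (rule exI[of _ C], rule exI[of _ K], intro conjI C0 allI impI)
      fix \<epsilon> :: real and n :: nat and adj :: "nat \<Rightarrow> nat list"
      assume asm: "0 < \<epsilon> \<and> \<epsilon> < 1 \<and> 1 \<le> n \<and> multigraph n adj \<and> max_degree_le n adj \<Delta>"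
      then have eps: "0 < \<epsilon>" "\<epsilon> < 1" and n: "1 \<le> n" and mg: "multigraph n adj" and md: "max_degree_le n adj \<Delta>"
        by auto
      define m where "m = nat \<lceil>(L0 + ln (1 / \<epsilon>)) * (1 + r)\<rceil>"
      define H0 where "H0 = 2 * m + 1"
      define s where "s = num_samples C \<epsilon>"
      have s_def': "s = nat \<lceil>C / \<epsilon>\<^sup>2\<rceil>" unfolding s_def num_samples_def ..
      have lpos: "ln (1 / \<epsilon>) > 0" using eps by simp
      have "(L0 + ln (1 / \<epsilon>)) * (1 + r) > 0" using L00 lpos r0 by (simp add: add_nonneg_pos)
      then have m1: "m \<ge> 1" unfolding m_def by linarith
      have H02: "2 \<le> H0" unfolding H0_def using m1 by simp
      have H0b: "2 * ln (1 + lam * \<Delta>) * (1 - 1 / (1 + sqrt (lam * \<Delta>))) ^ ((H0 - 1) div 2) \<le> \<epsilon> / (2 * exp 1)"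
        using stop_bound[OF lam r0 B0 eps L0_def m_def] unfolding H0_def B_def r_def by simp
      have sC: "real s \<ge> C / \<epsilon>\<^sup>2" unfolding s_def' by linarith
      have sC0: "C / \<epsilon>\<^sup>2 > 0" using C0 eps by simp
      have s1: "s \<ge> 1" using sC sC0 unfolding s_def' by linarith
      have sb: "12 * B\<^sup>2 \<le> real s * \<epsilon>\<^sup>2"
      proof -
        have "C \<le> real s * \<epsilon>\<^sup>2" using sC eps by (simp add: divide_le_eq)
        then show ?thesis unfolding C_def by simp
      qed
      note VF = vertex_facts[OF lam mg md _ H02 H0b]
      define Perms where "Perms = {\<sigma>. \<sigma> permutes {..<n}}"
      define LL where "LL = Ls {..<n} s"
      have idP: "id \<in> Perms" unfolding Perms_def by (simp add: permutes_id)
      have fP1: "finite Perms" unfolding Perms_def by (rule finite_permutations) simp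
      have fP2: "Perms \<noteq> {}" using idP by blast
      note fP = fP1 fP2
      have fL: "finite LL" "LL \<noteq> {}" unfolding LL_def using Ls_finite[of "{..<n}" s]
      proof -
        have "replicate s 0 \<in> Ls {..<n} s" unfolding Ls_def using n by auto
        then show "Ls {..<n} s \<noteq> {}" by auto
      qed auto
      have run: "apf_run lam \<epsilon> C n = pair_pmf (pmf_of_set Perms) (pmf_of_set LL)"
        unfolding apf_run_def order_pmf_def sample_pmf_def Perms_def LL_def Ls_def s_def
        by (simp add: conj_commute)
      show "measure_pmf.prob (apf_run lam \<epsilon> C n)
          {(\<sigma>, U). \<bar>apf_output lam \<epsilon> C n adj \<sigma> U - ln (Z n adj lam)\<bar> \<le> \<epsilon> * real n} \<ge> 2/3"
      proof -
        define E where "E = {(\<sigma>, U). \<bar>apf_output lam \<epsilon> C n adj \<sigma> U - ln (Z n adj lam)\<bar> \<le> \<epsilon> * real n}"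
        have good: "real (card {U \<in> LL. (\<sigma>, U) \<in> E}) \<ge> 2 / 3 * real (card LL)" if \<sigma>P: "\<sigma> \<in> Perms" for \<sigma>
        proof -
          have \<sigma>: "\<sigma> permutes {..<n}" using \<sigma>P unfolding Perms_def by simp
          define Y where "Y u = - ln (p_est lam \<epsilon> adj \<sigma> u)" for u
          define R where "R u = Zs lam n adj ({v. v < n \<and> \<sigma> u \<le> \<sigma> v} - {u}) / Zs lam n adj {v. v < n \<and> \<sigma> u \<le> \<sigma> v}" for u
          have Yb: "0 \<le> Y u \<and> Y u \<le> B" if u: "u < n" for u
          proof -
            have f: "1 / (1 + lam * \<Delta>) \<le> p_est lam \<epsilon> adj \<sigma> u" "p_est lam \<epsilon> adj \<sigma> u \<le> 1"
              using VF[OF u, of \<sigma>] by auto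
            have qp: "0 < 1 / (1 + lam * \<Delta>)" using lam by (simp add: add_pos_nonneg)
            have pp: "0 < p_est lam \<epsilon> adj \<sigma> u" using f qp by linarith
            have "ln (1 / (1 + lam * \<Delta>)) \<le> ln (p_est lam \<epsilon> adj \<sigma> u)"
              using f qp pp by (subst ln_le_cancel_iff) auto
            moreover have "ln (1 / (1 + lam * \<Delta>)) = - B" unfolding B_def using lam by (simp add: ln_div add_pos_nonneg)
            moreover have "ln (p_est lam \<epsilon> adj \<sigma> u) \<le> 0" using f pp by simp
            ultimately show ?thesis unfolding Y_def by linarith
          qed
          have YR: "\<bar>Y u - (- ln (R u))\<bar> \<le> \<epsilon> / (2 * exp 1)" if u: "u < n" for u
            using VF[OF u, of \<sigma>] unfolding Y_def R_def by (simp add: abs_minus_commute)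
          have close: "\<bar>(\<Sum>u<n. Y u) - ln (Z n adj lam)\<bar> \<le> real n * (\<epsilon> / (2 * exp 1))"
          proof -
            have "ln (Z n adj lam) = (\<Sum>u<n. - ln (R u))" unfolding R_def by (rule telescope[OF \<sigma> md lam, symmetric])
            then have "\<bar>(\<Sum>u<n. Y u) - ln (Z n adj lam)\<bar> = \<bar>\<Sum>u<n. Y u - (- ln (R u))\<bar>"
              by (simp add: sum.distrib sum_negf)
            also have "\<dots> \<le> (\<Sum>u<n. \<bar>Y u - (- ln (R u))\<bar>)" by (rule sum_abs)
            also have "\<dots> \<le> (\<Sum>u<n. \<epsilon> / (2 * exp 1))" using YR by (intro sum_mono) auto
            finally show ?thesis by simp
          qed
          have SG: "real (card {U \<in> Ls {..<n} s. \<bar>real n / real s * sum_list (map Y U) - (\<Sum>u<n. Y u)\<bar> \<le> \<epsilon> * n / 2})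
               \<ge> 2 / 3 * real (card (Ls {..<n} s))"
            by (rule sample_good[OF n Yb s1 eps(1) sb])
          have sub: "{U \<in> Ls {..<n} s. \<bar>real n / real s * sum_list (map Y U) - (\<Sum>u<n. Y u)\<bar> \<le> \<epsilon> * n / 2}
              \<subseteq> {U \<in> LL. (\<sigma>, U) \<in> E}"
          proof
            fix U assume U: "U \<in> {U \<in> Ls {..<n} s. \<bar>real n / real s * sum_list (map Y U) - (\<Sum>u<n. Y u)\<bar> \<le> \<epsilon> * n / 2}"
            have out: "apf_output lam \<epsilon> C n adj \<sigma> U = real n / real s * sum_list (map Y U)"
              unfolding apf_output_def s_def Y_def ..
            have ee: "2 \<le> 2 * exp (1::real)" by simp
            have e1: "\<epsilon> / (2 * exp 1) \<le> \<epsilon> / 2" by (rule divide_left_mono) (use eps ee in auto)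
            have c2: "real n * (\<epsilon> / (2 * exp 1)) \<le> real n * (\<epsilon> / 2)" using e1 by (intro mult_left_mono) auto
            have c3: "\<bar>real n / real s * sum_list (map Y U) - (\<Sum>u<n. Y u)\<bar> \<le> \<epsilon> * n / 2" using U by blast
            have c4: "real n * (\<epsilon> / 2) = \<epsilon> * real n / 2" by simp
            have "\<bar>apf_output lam \<epsilon> C n adj \<sigma> U - ln (Z n adj lam)\<bar> \<le> \<epsilon> * real n"
              unfolding out using c2 c3 c4 close by (simp only: abs_le_iff) linarith
            then show "U \<in> {U \<in> LL. (\<sigma>, U) \<in> E}" using U unfolding LL_def E_def by auto
          qed
          have "card {U \<in> Ls {..<n} s. \<bar>real n / real s * sum_list (map Y U) - (\<Sum>u<n. Y u)\<bar> \<le> \<epsilon> * n / 2}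
              \<le> card {U \<in> LL. (\<sigma>, U) \<in> E}"
            using fL(1) sub by (intro card_mono) auto
          then show ?thesis using SG unfolding LL_def by linarith
        qed
        show ?thesis unfolding run E_def[symmetric] by (rule prob_pair_good[OF fP fL good])
      qed
      show "\<forall>(\<sigma>, U) \<in> set_pmf (apf_run lam \<epsilon> C n).
          \<exists>m::nat. apf_queries lam \<epsilon> adj \<sigma> U = enat m \<and>
            real m \<le> K * (1 / \<epsilon>) powr ((2 * (1 + sqrt lam) + 4) * sqrt (real \<Delta> + 2) * (ln (real \<Delta> + 2)) ^ 1)
                          * (2 + ln (1 / \<epsilon>)) ^ 1"
      proof (rule ballI)
        fix p assume pS: "p \<in> set_pmf (apf_run lam \<epsilon> C n)"
        obtain \<sigma> U where p: "p = (\<sigma>, U)" by (cases p)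
        from pS have "(\<sigma>, U) \<in> set_pmf (apf_run lam \<epsilon> C n)" unfolding p .
        then have "U \<in> LL" unfolding run using fP fL by (simp add: set_pmf_of_set)
        then have U: "set U \<subseteq> {..<n}" "length U = s" unfolding LL_def Ls_def by auto
        define g where "g u = the_enat (queries_u lam \<epsilon> adj \<sigma> u)" for u
        have gq: "queries_u lam \<epsilon> adj \<sigma> u = enat (g u) \<and> real (g u) \<le> real H0 * (real \<Delta> + 2) ^ H0"
          if "u \<in> set U" for u
        proof -
          have u: "u < n" using U that by auto
          obtain mm where "queries_u lam \<epsilon> adj \<sigma> u = enat mm" "real mm \<le> real H0 * (real \<Delta> + 2) ^ H0"
            using VF[OF u, of \<sigma>] by blast
          then show ?thesis unfolding g_def by simp
        qed
        have aq: "apf_queries lam \<epsilon> adj \<sigma> U = enat (sum_list (map g U))"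
          unfolding apf_queries_def using gq by (intro sum_list_enat) auto
        have "real (sum_list (map g U)) = sum_list (map (\<lambda>u. real (g u)) U)" by (rule of_nat_sum_list_map)
        also have "\<dots> \<le> length U * (real H0 * (real \<Delta> + 2) ^ H0)"
          using gq by (intro sum_list_le_const) auto
        also have "\<dots> = real s * (real (2 * m + 1) * (real \<Delta> + 2) ^ (2 * m + 1))" unfolding H0_def U(2) ..
        also have "\<dots> \<le> K * (1 / \<epsilon>) powr ((2 * (1 + sqrt lam) + 4) * sqrt (real \<Delta> + 2) * (ln (real \<Delta> + 2)) ^ 1)
                          * (2 + ln (1 / \<epsilon>)) ^ 1"
          unfolding K_def by (rule cost_bound[OF lam r_def L00 eps C0 m_def s_def'])
        finally have res: "\<exists>m::nat. apf_queries lam \<epsilon> adj \<sigma> U = enat m \<and>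
            real m \<le> K * (1 / \<epsilon>) powr ((2 * (1 + sqrt lam) + 4) * sqrt (real \<Delta> + 2) * (ln (real \<Delta> + 2)) ^ 1)
                          * (2 + ln (1 / \<epsilon>)) ^ 1"
          using aq by blast
        show "case p of (\<sigma>, U) \<Rightarrow> \<exists>m::nat. apf_queries lam \<epsilon> adj \<sigma> U = enat m \<and>
            real m \<le> K * (1 / \<epsilon>) powr ((2 * (1 + sqrt lam) + 4) * sqrt (real \<Delta> + 2) * (ln (real \<Delta> + 2)) ^ 1)
                          * (2 + ln (1 / \<epsilon>)) ^ 1"
          unfolding p case_prod_conv by (rule res)
      qed
    qed
  qed
qed


end
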